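(* Let $n\geq1$ and let $G$ be a classical generator of $\overline{\mathcal{C}}_n$. Then $G$ is homologically connected.
   Context: Let $k$ be a field, $S$ the unit circle with anticlockwise orientation. Fix a discrete infinite subset $\mathscr{M}\subset S$ such that every limit point of $\mathscr{M}$ is a limit of both an increasing and a decreasing sequence of $\mathscr{M}$ in the cyclic order, with exactly $n$ such limit points (accumulation points); put $\overline{\mathscr{M}}=\mathscr{M}\cup L(\mathscr{M})$. Each $x\in\mathscr{M}$ has a cyclic predecessor $x^-$ and successor $x^+$ in $\mathscr{M}$; for accumulation points $a^\pm=a$. An arc of $\overline{\mathscr{M}}$ is an unordered pair $\{x_1,x_2\}\subset\overline{\mathscr{M}}$ with $x_2\ne x_1,x_1^-,x_1^+$; arcs cross if their endpoints strictly alternate cyclically; $\{x_1,x_2\}[1]=\{x_1^-,x_2^-\}$. The Paquette–Yıldırım category $\overline{\mathcal{C}}_n$ is a Hom-finite, $k$-linear, Krull–Schmidt triangulated category with suspension $[1]$ whose indecomposables $X$ correspond bijectively to arcs $\ell_X$ of $\overline{\mathscr{M}}$, with $\ell_{X[1]}=\ell_X[1]$, and $\mathrm{Hom}(X,Y)\cong k$ if $\ell_X$ and $\ell_Y[-1]$ cross, or both have an endpoint at a common accumulation point with $\ell_Y[-1]$ an anticlockwise rotation of $\ell_X$ about it; $0$ otherwise. For an object $G$, $\langle G\rangle_1$ is the full subcategory of direct summands of finite direct sums of suspensions of $G$. $G$ is homologically connected if for any two indecomposables $F,F'\in\langle G\rangle_1$ there is a finite sequence $F=F_1,\dots,F_{l+1}=F'$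 of indecomposables in $\langle G\rangle_1$ such that for each $i$ there is a nonzero element of $\mathrm{Ext}^1(F_i,F_{i+1})$ or of $\mathrm{Ext}^1(F_{i+1},F_i)$. $G$ is a classical generator if the smallest thick subcategory containing $G$ is the whole category. *)

theory Defs
  imports "HOL-Analysis.Analysis"
begin

section \<open>The marked circle and its arcs\<close>

text \<open>The unit circle S is sphere 0 1 in the complex plane.  The anticlockwise angle
  from x to y (both on S) is Arg2pi (y / x), which lies in the interval [0, 2 pi).\<close>

definition ccw :: "complex \<Rightarrow> complex \<Rightarrow> real" where
  "ccw x y = Arg2pi (y / x)"

definition lim_pts :: "complex set \<Rightarrow> complex set" where
  "lim_pts M = {a. a islimpt M}"

definition Mbar :: "complex set \<Rightarrow> complex set" where
  "Mbar M = M \<union> lim_pts M"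

definition PY_marked :: "complex set \<Rightarrow> nat \<Rightarrow> bool" where
  "PY_marked M n \<longleftrightarrow>
     M \<subseteq> sphere 0 1 \<and> infinite M \<and>
     (\<forall>x\<in>M. \<exists>e>0. \<forall>y\<in>M. dist y x < e \<longrightarrow> y = x) \<and>
     finite (lim_pts M) \<and> card (lim_pts M) = n \<and>
     (\<forall>a\<in>lim_pts M. \<forall>e>0.
        (\<exists>y\<in>M. 0 < ccw a y \<and> ccw a y < e) \<and>
        (\<exists>y\<in>M. 0 < ccw y a \<and> ccw y a < e))"

definition succ_pt :: "complex set \<Rightarrow> complex \<Rightarrow> complex" where
  "succ_pt M x = (if x \<in> lim_pts M then x else
     (THE y. y \<in> Mbar M \<and> y \<noteq> x \<and> (\<forall>z\<in>Mbar M. z \<noteq> x \<longrightarrow> ccw x y \<le> ccw x z)))"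

definition pred_pt :: "complex set \<Rightarrow> complex \<Rightarrow> complex" where
  "pred_pt M x = (if x \<in> lim_pts M then x else
     (THE y. y \<in> Mbar M \<and> y \<noteq> x \<and> (\<forall>z\<in>Mbar M. z \<noteq> x \<longrightarrow> ccw y x \<le> ccw z x)))"

text \<open>Arcs are unordered pairs, represented as two-element sets.\<close>

definition is_arc :: "complex set \<Rightarrow> complex set \<Rightarrow> bool" where
  "is_arc M A \<longleftrightarrow> (\<exists>x1 x2. A = {x1, x2} \<and> x1 \<in> Mbar M \<and> x2 \<in> Mbar M \<and>
      x2 \<noteq> x1 \<and> x2 \<noteq> pred_pt M x1 \<and> x2 \<noteq> succ_pt M x1)"

definition arc_shift :: "complex set \<Rightarrow> complex set \<Rightarrow> complex set" where
  "arc_shift M A = pred_pt M ` A"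

definition arc_unshift :: "complex set \<Rightarrow> complex set \<Rightarrow> complex set" where
  "arc_unshift M A = succ_pt M ` A"

definition cyc_between :: "complex \<Rightarrow> complex \<Rightarrow> complex \<Rightarrow> bool" where
  "cyc_between x y z \<longleftrightarrow> 0 < ccw x y \<and> ccw x y < ccw x z"

definition arcs_cross :: "complex set \<Rightarrow> complex set \<Rightarrow> bool" where
  "arcs_cross A B \<longleftrightarrow> (\<exists>a b c d. A = {a, b} \<and> B = {c, d} \<and>
      cyc_between a c b \<and> cyc_between b d a)"

definition ccw_rotation :: "complex set \<Rightarrow> complex set \<Rightarrow> complex set \<Rightarrow> bool" where
  "ccw_rotation M A B \<longleftrightarrow> (\<exists>a x y. a \<in> lim_pts M \<and> A = {a, x} \<and> B = {a, y} \<and>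
      ccw x (succ_pt M x) \<le> ccw x y \<and> ccw x y < ccw x a)"

definition hom_cond :: "complex set \<Rightarrow> complex set \<Rightarrow> complex set \<Rightarrow> bool" where
  "hom_cond M A B \<longleftrightarrow> arcs_cross A B \<or> ccw_rotation M A B"

section \<open>k-linear triangulated categories\<close>

text \<open>Objects of type 'o, morphisms of type 'm, Hom X Y the set of morphisms X \<rightarrow> Y,
  comp g f the composite of f then g, scalars in the field 'k.\<close>

record ('o, 'm, 'k::field) tricat =
  Hom  :: "'o \<Rightarrow> 'o \<Rightarrow> 'm set"
  comp :: "'m \<Rightarrow> 'm \<Rightarrow> 'm"
  idm  :: "'o \<Rightarrow> 'm"
  zer  :: "'o \<Rightarrow> 'o \<Rightarrow> 'm"
  add  :: "'m \<Rightarrow> 'm \<Rightarrow> 'm"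
  sm   :: "'k \<Rightarrow> 'm \<Rightarrow> 'm"
  sh   :: "'o \<Rightarrow> 'o"
  shm  :: "'m \<Rightarrow> 'm"
  dtri :: "('o \<times> 'o \<times> 'o \<times> 'm \<times> 'm \<times> 'm) set"

definition is_iso :: "('o, 'm, 'k::field) tricat \<Rightarrow> 'o \<Rightarrow> 'o \<Rightarrow> 'm \<Rightarrow> bool" where
  "is_iso C X Y f \<longleftrightarrow> f \<in> Hom C X Y \<and>
     (\<exists>g\<in>Hom C Y X. comp C g f = idm C X \<and> comp C f g = idm C Y)"

definition isomorphic :: "('o, 'm, 'k::field) tricat \<Rightarrow> 'o \<Rightarrow> 'o \<Rightarrow> bool" where
  "isomorphic C X Y \<longleftrightarrow> (\<exists>f. is_iso C X Y f)"

definition zero_obj :: "('o, 'm, 'k::field) tricat \<Rightarrow> 'o \<Rightarrow> bool" where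
  "zero_obj C Z \<longleftrightarrow> (\<forall>X. Hom C Z X = {zer C Z X} \<and> Hom C X Z = {zer C X Z})"

definition is_biprod :: "('o, 'm, 'k::field) tricat \<Rightarrow> 'o \<Rightarrow> 'o \<Rightarrow> 'o \<Rightarrow> 'm \<Rightarrow> 'm \<Rightarrow> 'm \<Rightarrow> 'm \<Rightarrow> bool" where
  "is_biprod C X Y S i1 i2 p1 p2 \<longleftrightarrow>
     i1 \<in> Hom C X S \<and> i2 \<in> Hom C Y S \<and> p1 \<in> Hom C S X \<and> p2 \<in> Hom C S Y \<and>
     comp C p1 i1 = idm C X \<and> comp C p2 i2 = idm C Y \<and>
     comp C p1 i2 = zer C Y X \<and> comp C p2 i1 = zer C X Y \<and>
     add C (comp C i1 p1) (comp C i2 p2) = idm C S"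

definition biprod :: "('o, 'm, 'k::field) tricat \<Rightarrow> 'o \<Rightarrow> 'o \<Rightarrow> 'o \<Rightarrow> bool" where
  "biprod C X Y S \<longleftrightarrow> (\<exists>i1 i2 p1 p2. is_biprod C X Y S i1 i2 p1 p2)"

inductive dsum :: "('o, 'm, 'k::field) tricat \<Rightarrow> 'o list \<Rightarrow> 'o \<Rightarrow> bool" for C where
  dsum_Nil: "zero_obj C Z \<Longrightarrow> dsum C [] Z"
| dsum_Cons: "dsum C Xs S' \<Longrightarrow> biprod C X S' S \<Longrightarrow> dsum C (X # Xs) S"

definition indec :: "('o, 'm, 'k::field) tricat \<Rightarrow> 'o \<Rightarrow> bool" where
  "indec C X \<longleftrightarrow> \<not> zero_obj C X \<and>
     (\<forall>Y Z. biprod C Y Z X \<longrightarrow> zero_obj C Y \<or> zero_obj C Z)"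

definition local_end :: "('o, 'm, 'k::field) tricat \<Rightarrow> 'o \<Rightarrow> bool" where
  "local_end C X \<longleftrightarrow> \<not> zero_obj C X \<and>
     (\<forall>f\<in>Hom C X X. is_iso C X X f \<or> is_iso C X X (add C (idm C X) (sm C (-1) f)))"

definition lin_comb :: "('o, 'm, 'k::field) tricat \<Rightarrow> 'o \<Rightarrow> 'o \<Rightarrow> 'k list \<Rightarrow> 'm list \<Rightarrow> 'm" where
  "lin_comb C X Y cs fs = foldr (\<lambda>(c, f) acc. add C (sm C c f) acc) (zip cs fs) (zer C X Y)"

definition is_tri :: "('o, 'm, 'k::field) tricat \<Rightarrow> 'o \<times> 'o \<times> 'o \<times> 'm \<times> 'm \<times> 'm \<Rightarrow> bool" where
  "is_tri C T = (case T of (X, Y, Z, f, g, h) \<Rightarrow>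
     f \<in> Hom C X Y \<and> g \<in> Hom C Y Z \<and> h \<in> Hom C Z (sh C X))"

definition tri_mor :: "('o, 'm, 'k::field) tricat \<Rightarrow> 'o \<times> 'o \<times> 'o \<times> 'm \<times> 'm \<times> 'm \<Rightarrow>
    'o \<times> 'o \<times> 'o \<times> 'm \<times> 'm \<times> 'm \<Rightarrow> 'm \<Rightarrow> 'm \<Rightarrow> 'm \<Rightarrow> bool" where
  "tri_mor C T T' a b c = (case T of (X, Y, Z, f, g, h) \<Rightarrow> case T' of (X', Y', Z', f', g', h') \<Rightarrow>
     a \<in> Hom C X X' \<and> b \<in> Hom C Y Y' \<and> c \<in> Hom C Z Z' \<and>
     comp C b f = comp C f' a \<and> comp C c g = comp C g' b \<and>
     comp C (shm C a) h = comp C h' c)"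

definition klinear_additive :: "('o, 'm, 'k::field) tricat \<Rightarrow> bool" where
  "klinear_additive C \<longleftrightarrow>
    (\<forall>X Y. zer C X Y \<in> Hom C X Y) \<and>
    (\<forall>X. idm C X \<in> Hom C X X) \<and>
    (\<forall>X Y Z f g. f \<in> Hom C X Y \<longrightarrow> g \<in> Hom C Y Z \<longrightarrow> comp C g f \<in> Hom C X Z) \<and>
    (\<forall>X Y Z W f g h. f \<in> Hom C X Y \<longrightarrow> g \<in> Hom C Y Z \<longrightarrow> h \<in> Hom C Z W \<longrightarrow>
        comp C h (comp C g f) = comp C (comp C h g) f) \<and>
    (\<forall>X Y f. f \<in> Hom C X Y \<longrightarrow> comp C (idm C Y) f = f \<and> comp C f (idm C X) = f) \<and>
    \<comment> \<open>each Hom X Y is a k-vector space with zero zer X Y\<close>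
    (\<forall>X Y f g. f \<in> Hom C X Y \<longrightarrow> g \<in> Hom C X Y \<longrightarrow> add C f g \<in> Hom C X Y) \<and>
    (\<forall>X Y a f. f \<in> Hom C X Y \<longrightarrow> sm C a f \<in> Hom C X Y) \<and>
    (\<forall>X Y f g h. f \<in> Hom C X Y \<longrightarrow> g \<in> Hom C X Y \<longrightarrow> h \<in> Hom C X Y \<longrightarrow>
        add C (add C f g) h = add C f (add C g h)) \<and>
    (\<forall>X Y f g. f \<in> Hom C X Y \<longrightarrow> g \<in> Hom C X Y \<longrightarrow> add C f g = add C g f) \<and>
    (\<forall>X Y f. f \<in> Hom C X Y \<longrightarrow> add C f (zer C X Y) = f) \<and>
    (\<forall>X Y f. f \<in> Hom C X Y \<longrightarrow> sm C 0 f = zer C X Y \<and> sm C 1 f = f) \<and>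
    (\<forall>X Y a b f. f \<in> Hom C X Y \<longrightarrow> sm C (a + b) f = add C (sm C a f) (sm C b f)) \<and>
    (\<forall>X Y a b f. f \<in> Hom C X Y \<longrightarrow> sm C (a * b) f = sm C a (sm C b f)) \<and>
    (\<forall>X Y a f g. f \<in> Hom C X Y \<longrightarrow> g \<in> Hom C X Y \<longrightarrow>
        sm C a (add C f g) = add C (sm C a f) (sm C a g)) \<and>
    \<comment> \<open>composition is k-bilinear\<close>
    (\<forall>X Y Z f f' g. f \<in> Hom C X Y \<longrightarrow> f' \<in> Hom C X Y \<longrightarrow> g \<in> Hom C Y Z \<longrightarrow>
        comp C g (add C f f') = add C (comp C g f) (comp C g f')) \<and>
    (\<forall>X Y Z f g g'. f \<in> Hom C X Y \<longrightarrow> g \<in> Hom C Y Z \<longrightarrow> g' \<in> Hom C Y Z \<longrightarrow>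
        comp C (add C g g') f = add C (comp C g f) (comp C g' f)) \<and>
    (\<forall>X Y Z a f g. f \<in> Hom C X Y \<longrightarrow> g \<in> Hom C Y Z \<longrightarrow>
        comp C (sm C a g) f = sm C a (comp C g f) \<and> comp C g (sm C a f) = sm C a (comp C g f)) \<and>
    \<comment> \<open>additive: zero object and binary biproducts\<close>
    (\<exists>Z. zero_obj C Z) \<and>
    (\<forall>X Y. \<exists>S. biprod C X Y S) \<and>
    \<comment> \<open>Hom-finite\<close>
    (\<forall>X Y. \<exists>fs. set fs \<subseteq> Hom C X Y \<and>
        (\<forall>g\<in>Hom C X Y. \<exists>cs. length cs = length fs \<and> g = lin_comb C X Y cs fs))"

definition krull_schmidt :: "('o, 'm, 'k::field) tricat \<Rightarrow> bool" where
  "krull_schmidt C \<longleftrightarrow> (\<forall>X. \<exists>Xs. dsum C Xs X \<and> (\<forall>Y\<in>set Xs. local_end C Y))"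

definition triangulated :: "('o, 'm, 'k::field) tricat \<Rightarrow> bool" where
  "triangulated C \<longleftrightarrow>
    \<comment> \<open>the suspension is a k-linear autoequivalence\<close>
    (\<forall>X Y f. f \<in> Hom C X Y \<longrightarrow> shm C f \<in> Hom C (sh C X) (sh C Y)) \<and>
    (\<forall>X Y Z f g. f \<in> Hom C X Y \<longrightarrow> g \<in> Hom C Y Z \<longrightarrow>
        shm C (comp C g f) = comp C (shm C g) (shm C f)) \<and>
    (\<forall>X. shm C (idm C X) = idm C (sh C X)) \<and>
    (\<forall>X Y f g. f \<in> Hom C X Y \<longrightarrow> g \<in> Hom C X Y \<longrightarrow> shm C (add C f g) = add C (shm C f) (shm C g)) \<and>
    (\<forall>X Y a f. f \<in> Hom C X Y \<longrightarrow> shm C (sm C a f) = sm C a (shm C f)) \<and>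
    (\<forall>X Y. bij_betw (shm C) (Hom C X Y) (Hom C (sh C X) (sh C Y))) \<and>
    (\<forall>Y. \<exists>X. isomorphic C (sh C X) Y) \<and>
    \<comment> \<open>distinguished triangles\<close>
    (\<forall>T\<in>dtri C. is_tri C T) \<and>
    \<comment> \<open>TR1\<close>
    (\<forall>T T' a b c. T \<in> dtri C \<longrightarrow> is_tri C T' \<longrightarrow> tri_mor C T T' a b c \<longrightarrow>
        is_iso C (fst T) (fst T') a \<longrightarrow> is_iso C (fst (snd T)) (fst (snd T')) b \<longrightarrow>
        is_iso C (fst (snd (snd T))) (fst (snd (snd T'))) c \<longrightarrow> T' \<in> dtri C) \<and>
    (\<forall>X Z. zero_obj C Z \<longrightarrow> (X, X, Z, idm C X, zer C X Z, zer C Z (sh C X)) \<in> dtri C) \<and>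
    (\<forall>X Y f. f \<in> Hom C X Y \<longrightarrow> (\<exists>Z g h. (X, Y, Z, f, g, h) \<in> dtri C)) \<and>
    \<comment> \<open>TR2 (rotation)\<close>
    (\<forall>X Y Z f g h. (X, Y, Z, f, g, h) \<in> dtri C \<longrightarrow>
        (Y, Z, sh C X, g, h, sm C (-1) (shm C f)) \<in> dtri C) \<and>
    \<comment> \<open>TR3\<close>
    (\<forall>X Y Z f g h X' Y' Z' f' g' h' a b.
        (X, Y, Z, f, g, h) \<in> dtri C \<longrightarrow> (X', Y', Z', f', g', h') \<in> dtri C \<longrightarrow>
        a \<in> Hom C X X' \<longrightarrow> b \<in> Hom C Y Y' \<longrightarrow> comp C b f = comp C f' a \<longrightarrow>
        (\<exists>c. tri_mor C (X, Y, Z, f, g, h) (X', Y', Z', f', g', h') a b c)) \<and>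
    \<comment> \<open>TR4 (octahedral axiom)\<close>
    (\<forall>X Y Z Z' X' Y' f g f2 f3 g2 g3 h2 h3.
        (X, Y, Z', f, f2, f3) \<in> dtri C \<longrightarrow> (Y, Z, X', g, g2, g3) \<in> dtri C \<longrightarrow>
        (X, Z, Y', comp C g f, h2, h3) \<in> dtri C \<longrightarrow>
        (\<exists>u v. (Z', Y', X', u, v, comp C (shm C f2) g3) \<in> dtri C \<and>
           comp C u f2 = comp C h2 g \<and> comp C h3 u = f3 \<and>
           comp C v h2 = g2 \<and> comp C g3 v = comp C (shm C f) h3))"

section \<open>The Paquette--Yildirim category\<close>

definition hom_one_dim :: "('o, 'm, 'k::field) tricat \<Rightarrow> 'o \<Rightarrow> 'o \<Rightarrow> bool" where
  "hom_one_dim C X Y \<longleftrightarrow>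
     (\<exists>f\<in>Hom C X Y. f \<noteq> zer C X Y \<and> (\<forall>g\<in>Hom C X Y. \<exists>c. g = sm C c f))"

definition PY_category :: "complex set \<Rightarrow> ('o, 'm, 'k::field) tricat \<Rightarrow> ('o \<Rightarrow> complex set) \<Rightarrow> bool" where
  "PY_category M C arc_of \<longleftrightarrow>
     klinear_additive C \<and> krull_schmidt C \<and> triangulated C \<and>
     (\<forall>X. indec C X \<longrightarrow> is_arc M (arc_of X)) \<and>
     (\<forall>A. is_arc M A \<longrightarrow> (\<exists>X. indec C X \<and> arc_of X = A)) \<and>
     (\<forall>X Y. indec C X \<longrightarrow> indec C Y \<longrightarrow> (arc_of X = arc_of Y \<longleftrightarrow> isomorphic C X Y)) \<and>
     (\<forall>X. indec C X \<longrightarrow> arc_of (sh C X) = arc_shift M (arc_of X)) \<and>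
     (\<forall>X Y. indec C X \<longrightarrow> indec C Y \<longrightarrow>
        (if hom_cond M (arc_of X) (arc_unshift M (arc_of Y))
         then hom_one_dim C X Y else Hom C X Y = {zer C X Y}))"

section \<open>Thick subcategories, classical generators, homological connectedness\<close>

definition thick :: "('o, 'm, 'k::field) tricat \<Rightarrow> 'o set \<Rightarrow> bool" where
  "thick C T \<longleftrightarrow>
     (\<exists>Z\<in>T. zero_obj C Z) \<and>
     (\<forall>X Y. X \<in> T \<longrightarrow> isomorphic C X Y \<longrightarrow> Y \<in> T) \<and>
     (\<forall>X. X \<in> T \<longleftrightarrow> sh C X \<in> T) \<and>
     (\<forall>X Y Z f g h. (X, Y, Z, f, g, h) \<in> dtri C \<longrightarrow>
        (X \<in> T \<and> Y \<in> T \<longrightarrow> Z \<in> T) \<and> (Y \<in> T \<and> Z \<in> T \<longrightarrow> X \<in> T) \<and>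
        (X \<in> T \<and> Z \<in> T \<longrightarrow> Y \<in> T)) \<and>
     (\<forall>X Y S. biprod C X Y S \<longrightarrow> S \<in> T \<longrightarrow> X \<in> T)"

definition thick_closure :: "('o, 'm, 'k::field) tricat \<Rightarrow> 'o \<Rightarrow> 'o set" where
  "thick_closure C G = \<Inter>{T. thick C T \<and> G \<in> T}"

definition classical_generator :: "('o, 'm, 'k::field) tricat \<Rightarrow> 'o \<Rightarrow> bool" where
  "classical_generator C G \<longleftrightarrow> thick_closure C G = UNIV"

text \<open>Y is (isomorphic to) G[i] for some integer i.\<close>
definition is_suspension_of :: "('o, 'm, 'k::field) tricat \<Rightarrow> 'o \<Rightarrow> 'o \<Rightarrow> bool" where
  "is_suspension_of C G Y \<longleftrightarrow>
     (\<exists>i::nat. isomorphic C Y ((sh C ^^ i) G) \<or> isomorphic C ((sh C ^^ i) Y) G)"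

definition in_add1 :: "('o, 'm, 'k::field) tricat \<Rightarrow> 'o \<Rightarrow> 'o \<Rightarrow> bool" where
  "in_add1 C G F \<longleftrightarrow> (\<exists>Xs S F'. (\<forall>X\<in>set Xs. is_suspension_of C G X) \<and>
      dsum C Xs S \<and> biprod C F F' S)"

definition ext1_nonzero :: "('o, 'm, 'k::field) tricat \<Rightarrow> 'o \<Rightarrow> 'o \<Rightarrow> bool" where
  "ext1_nonzero C F F' \<longleftrightarrow> (\<exists>f\<in>Hom C F (sh C F'). f \<noteq> zer C F (sh C F'))"

definition homologically_connected :: "('o, 'm, 'k::field) tricat \<Rightarrow> 'o \<Rightarrow> bool" where
  "homologically_connected C G \<longleftrightarrow>
    (\<forall>F F'. indec C F \<longrightarrow> in_add1 C G F \<longrightarrow> indec C F' \<longrightarrow> in_add1 C G F' \<longrightarrow>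
      (\<exists>Fs. Fs \<noteq> [] \<and> hd Fs = F \<and> last Fs = F' \<and>
         (\<forall>X\<in>set Fs. indec C X \<and> in_add1 C G X) \<and>
         (\<forall>i. Suc i < length Fs \<longrightarrow>
            ext1_nonzero C (Fs ! i) (Fs ! Suc i) \<or> ext1_nonzero C (Fs ! Suc i) (Fs ! i))))"

end

theory Submission
  imports Defs
begin


lemma ccw_ge0: "0 \<le> ccw x y" unfolding ccw_def by (rule Arg2pi_ge_0)
lemma ccw_lt: "ccw x y < 2 * pi" unfolding ccw_def by (rule Arg2pi_lt_2pi)

lemma ccw_self: "x \<noteq> 0 \<Longrightarrow> ccw x x = 0" unfolding ccw_def by (simp add: Arg2pi_eq_0)
lemma nz1: "norm x = 1 \<Longrightarrow> x \<noteq> 0" by auto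

lemma ccw_eq0: assumes "norm x = 1" "norm y = 1" shows "ccw x y = 0 \<longleftrightarrow> x = y"
proof
  assume "x = y" then show "ccw x y = 0" using ccw_self[OF nz1[OF assms(1)]] by simp
next
  assume a: "ccw x y = 0"
  have x0: "x \<noteq> 0" using assms by auto
  have "y / x \<in> \<real>" "0 \<le> Re (y / x)" using a unfolding ccw_def Arg2pi_eq_0 by auto
  then obtain r where r: "y / x = of_real r" "0 \<le> r" by (metis Reals_cases Re_complex_of_real)
  have "norm (y / x) = 1" using assms by (simp add: norm_divide)
  then have "r = 1" using r by simp
  then show "x = y" using r x0 by (simp add: divide_eq_eq)
qed

lemma ccw_add:
  assumes "norm x = 1" "norm y = 1" "norm z = 1"
  shows "ccw x z = (if ccw x y + ccw y z < 2 * pi then ccw x y + ccw y z else ccw x y + ccw y z - 2 * pi)"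
proof -
  have x0: "x \<noteq> 0" and y0: "y \<noteq> 0" and z0: "z \<noteq> 0" using assms by auto
  have "z / x = (y / x) * (z / y)" using x0 y0 by (simp add: field_simps)
  then show ?thesis unfolding ccw_def using Arg2pi_times[of "y / x" "z / y"] x0 y0 z0 by simp
qed

lemma ccw_base:
  assumes "norm b = 1" "norm y = 1" "norm z = 1"
  shows "ccw y z = (if ccw b y \<le> ccw b z then ccw b z - ccw b y else ccw b z - ccw b y + 2 * pi)"
  using ccw_add[OF assms] ccw_ge0[of y z] ccw_lt[of y z] ccw_ge0[of b y] ccw_lt[of b y]
  by (auto split: if_splits)

lemma ccw_inj2: assumes "norm x = 1" "norm y = 1" "norm z = 1" "ccw x y = ccw x z" shows "y = z"
proof -
  have "ccw y z = 0" using ccw_base[OF assms(1-3)] assms(4) by simp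
  then show ?thesis using ccw_eq0 assms by blast
qed

lemma ccw_rev: assumes "norm x = 1" "norm y = 1" "x \<noteq> y" shows "ccw y x = 2 * pi - ccw x y"
proof -
  have "ccw x x = 0" using ccw_self[OF nz1[OF assms(1)]] .
  moreover have "ccw x y \<noteq> 0" using ccw_eq0 assms by blast
  ultimately show ?thesis using ccw_base[OF assms(1) assms(2) assms(1)] ccw_ge0[of x y] by auto
qed

lemma ccw_inj1: assumes "norm x = 1" "norm y = 1" "norm z = 1" "ccw y x = ccw z x" shows "y = z"
proof (cases "y = x \<or> z = x")
  case True
  then show ?thesis using assms ccw_eq0 ccw_self by (metis norm_zero zero_neq_one)
next
  case False
  then have "ccw x y = ccw x z" using ccw_rev assms by (metis add_diff_cancel_left' diff_add_cancel)
  then show ?thesis using ccw_inj2 assms by blast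
qed


context
  fixes M :: "complex set" and n :: nat
  assumes PY: "PY_marked M n"
begin

lemma M_sphere: "M \<subseteq> sphere 0 1" using PY unfolding PY_marked_def by blast
lemma M_inf: "infinite M" using PY unfolding PY_marked_def by blast
lemma M_disc: "x \<in> M \<Longrightarrow> \<exists>e>0. \<forall>y\<in>M. dist y x < e \<longrightarrow> y = x" using PY unfolding PY_marked_def by blast
lemma lim_fin: "finite (lim_pts M)" and lim_card: "card (lim_pts M) = n" using PY unfolding PY_marked_def by blast+
lemma approach_acw: "a \<in> lim_pts M \<Longrightarrow> e > 0 \<Longrightarrow> \<exists>y\<in>M. 0 < ccw a y \<and> ccw a y < e"
  using PY unfolding PY_marked_def by blast
lemma approach_cw: "a \<in> lim_pts M \<Longrightarrow> e > 0 \<Longrightarrow> \<exists>y\<in>M. 0 < ccw y a \<and> ccw y a < e"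
  using PY unfolding PY_marked_def by blast

lemma Mbar_closure: "Mbar M = closure M"
  unfolding Mbar_def lim_pts_def closure_def ..

lemma Mbar_sphere: "Mbar M \<subseteq> sphere 0 1"
  unfolding Mbar_closure using closure_minimal[OF M_sphere] by simp

lemma norm_Mbar: "x \<in> Mbar M \<Longrightarrow> norm x = 1" using Mbar_sphere by auto
lemma M_Mbar: "x \<in> M \<Longrightarrow> x \<in> Mbar M" unfolding Mbar_def by simp
lemma lim_Mbar: "x \<in> lim_pts M \<Longrightarrow> x \<in> Mbar M" unfolding Mbar_def by simp
lemma Mbar_cases: "x \<in> Mbar M \<Longrightarrow> x \<in> M \<or> x \<in> lim_pts M" unfolding Mbar_def by simp

lemma M_not_lim: "x \<in> M \<Longrightarrow> x \<notin> lim_pts M"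
proof
  assume x: "x \<in> M" and l: "x \<in> lim_pts M"
  obtain e where e: "e > 0" "\<forall>y\<in>M. dist y x < e \<longrightarrow> y = x" using M_disc[OF x] by blast
  have "x islimpt M" using l unfolding lim_pts_def by simp
  then obtain y where "y \<in> M" "y \<noteq> x" "dist y x < e" using e(1) unfolding islimpt_approachable by blast
  then show False using e by blast
qed

lemma Mbar_iso: "x \<in> M \<Longrightarrow> \<exists>e>0. \<forall>y\<in>Mbar M. dist y x < e \<longrightarrow> y = x"
proof -
  assume x: "x \<in> M"
  obtain e where e: "e > 0" "\<forall>y\<in>M. dist y x < e \<longrightarrow> y = x" using M_disc[OF x] by blast
  have "y = x" if y: "y \<in> Mbar M" "dist y x < e" for y
  proof (cases "y \<in> M")
    case True then show ?thesis using e y by blast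
  next
    case False
    then have yl: "y islimpt M" using y unfolding Mbar_def lim_pts_def by simp
    have yx: "y \<noteq> x" using False x by blast
    define e' where "e' = min (e - dist y x) (dist x y)"
    have "e' > 0" unfolding e'_def using y yx by simp
    then obtain m where m: "m \<in> M" "m \<noteq> y" "dist m y < e'" using yl unfolding islimpt_approachable by blast
    have "dist m x \<le> dist m y + dist y x" by (rule dist_triangle)
    then have "dist m x < e" using m unfolding e'_def by simp
    then have "m = x" using e m by blast
    then show ?thesis using m unfolding e'_def by (simp add: dist_commute)
  qed
  then show ?thesis using e by blast
qed

lemma lim_ne: "n \<ge> 1 \<Longrightarrow> \<exists>a. a \<in> lim_pts M"
  using lim_card by (metis card.empty ex_in_conv not_one_le_zero)

lemma cont_ccw: assumes "norm x = 1" "norm y = 1" "y \<noteq> x" shows "isCont (\<lambda>y. ccw x y) y"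
proof -
  have x0: "x \<noteq> 0" using assms by auto
  have "y / x \<notin> \<real>\<^sub>\<ge>\<^sub>0"
  proof
    assume "y / x \<in> \<real>\<^sub>\<ge>\<^sub>0"
    then have "Arg2pi (y / x) = 0" unfolding complex_nonneg_Reals_iff Arg2pi_eq_0 complex_is_Real_iff by simp
    then have "ccw x y = 0" unfolding ccw_def .
    then show False using ccw_eq0 assms by blast
  qed
  then have "isCont Arg2pi (y / x)" by (rule continuous_at_Arg2pi)
  moreover have "isCont (\<lambda>y. y / x) y" using x0 by (intro continuous_intros)
  ultimately have "isCont (Arg2pi \<circ> (\<lambda>y. y / x)) y" using continuous_at_compose by blast
  then show ?thesis unfolding ccw_def o_def .
qed

lemma succ_ex: "x \<in> M \<Longrightarrow> \<exists>s. s \<in> Mbar M \<and> s \<noteq> x \<and> (\<forall>z\<in>Mbar M. z \<noteq> x \<longrightarrow> ccw x s \<le> ccw x z)"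
proof -
  assume x: "x \<in> M"
  obtain e where e: "e > 0" "\<forall>y\<in>Mbar M. dist y x < e \<longrightarrow> y = x" using Mbar_iso[OF x] by blast
  define K where "K = Mbar M - ball x e"
  have "closed K" unfolding K_def Mbar_closure by (intro closed_Diff) auto
  moreover have "bounded K" unfolding K_def using Mbar_sphere bounded_sphere bounded_subset by blast
  ultimately have cK: "compact K" using compact_eq_bounded_closed by blast
  have "infinite (M - {x})" using M_inf by simp
  then obtain y where "y \<in> M - {x}" by (metis finite.emptyI ex_in_conv)
  then have y: "y \<in> M" "y \<noteq> x" by auto
  have "y \<in> K" unfolding K_def using y e M_Mbar by (auto simp: dist_commute)
  then have neK: "K \<noteq> {}" by blast
  have xn: "norm x = 1" using norm_Mbar M_Mbar x by blast
  have "continuous_on K (\<lambda>y. ccw x y)"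
  proof (rule continuous_at_imp_continuous_on, rule ballI)
    fix z assume z: "z \<in> K"
    then have "z \<noteq> x" "norm z = 1" unfolding K_def using e(1) norm_Mbar by auto
    then show "isCont (\<lambda>y. ccw x y) z" using cont_ccw xn by blast
  qed
  then obtain s where s: "s \<in> K" "\<forall>z\<in>K. ccw x s \<le> ccw x z" using continuous_attains_inf[OF cK neK] by blast
  have "s \<in> Mbar M" "s \<noteq> x" using s(1) e(1) unfolding K_def by auto
  moreover have "\<forall>z\<in>Mbar M. z \<noteq> x \<longrightarrow> ccw x s \<le> ccw x z"
  proof (intro ballI impI)
    fix z assume "z \<in> Mbar M" "z \<noteq> x"
    then have "z \<in> K" unfolding K_def using e by (auto simp: dist_commute)
    then show "ccw x s \<le> ccw x z" using s by blast
  qed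
  ultimately show ?thesis by blast
qed

lemma succ_M:
  assumes x: "x \<in> M"
  shows "succ_pt M x \<in> Mbar M" "succ_pt M x \<noteq> x" "\<And>z. z \<in> Mbar M \<Longrightarrow> z \<noteq> x \<Longrightarrow> ccw x (succ_pt M x) \<le> ccw x z"
proof -
  let ?P = "\<lambda>y. y \<in> Mbar M \<and> y \<noteq> x \<and> (\<forall>z\<in>Mbar M. z \<noteq> x \<longrightarrow> ccw x y \<le> ccw x z)"
  have xn: "norm x = 1" using norm_Mbar M_Mbar x by blast
  have ex: "\<exists>!y. ?P y"
  proof -
    obtain s where s: "?P s" using succ_ex[OF x] by blast
    have u: "y = s" if py: "?P y" for y
    proof -
      have "ccw x y \<le> ccw x s" using py s by blast
      moreover have "ccw x s \<le> ccw x y" using py s by blast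
      ultimately have "ccw x y = ccw x s" by simp
      moreover have "norm y = 1" "norm s = 1" using norm_Mbar s py by auto
      ultimately show ?thesis using ccw_inj2 xn by blast
    qed
    show ?thesis using s u by (rule ex1I)
  qed
  have "succ_pt M x = (THE y. ?P y)" unfolding succ_pt_def using M_not_lim[OF x] by simp
  then have "?P (succ_pt M x)" using theI'[OF ex] by simp
  then show "succ_pt M x \<in> Mbar M" "succ_pt M x \<noteq> x" "\<And>z. z \<in> Mbar M \<Longrightarrow> z \<noteq> x \<Longrightarrow> ccw x (succ_pt M x) \<le> ccw x z"
    by auto
qed

lemma succ_lim: "a \<in> lim_pts M \<Longrightarrow> succ_pt M a = a" unfolding succ_pt_def by simp
lemma pred_lim: "a \<in> lim_pts M \<Longrightarrow> pred_pt M a = a" unfolding pred_pt_def by simp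

lemma succ_not_lim: assumes x: "x \<in> M" shows "succ_pt M x \<notin> lim_pts M"
proof
  assume a: "succ_pt M x \<in> lim_pts M"
  let ?a = "succ_pt M x"
  have xn: "norm x = 1" using norm_Mbar M_Mbar x by blast
  have an: "norm ?a = 1" using norm_Mbar lim_Mbar a by blast
  have ax: "?a \<noteq> x" using succ_M(2)[OF x] .
  have pos: "ccw x ?a > 0" using ccw_eq0[OF xn an] ax ccw_ge0[of x ?a] by auto
  obtain y where y: "y \<in> M" "0 < ccw y ?a" "ccw y ?a < ccw x ?a" using approach_cw[OF a pos] by blast
  have yn: "norm y = 1" using norm_Mbar M_Mbar y(1) by blast
  have yx: "y \<noteq> x" using y by auto
  have "ccw x ?a = (if ccw x y + ccw y ?a < 2 * pi then ccw x y + ccw y ?a else ccw x y + ccw y ?a - 2 * pi)"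
    using ccw_add[OF xn yn an] .
  then have "ccw x y < ccw x ?a" using y ccw_lt[of x y] ccw_ge0[of x y] ccw_lt[of y ?a] by (auto split: if_splits)
  moreover have "ccw x ?a \<le> ccw x y" using succ_M(3)[OF x] M_Mbar[OF y(1)] yx by blast
  ultimately show False by simp
qed

lemma succ_in_M: "x \<in> M \<Longrightarrow> succ_pt M x \<in> M"
  using succ_M(1) succ_not_lim Mbar_cases by blast

lemma pred_succ: assumes x: "x \<in> M" shows "pred_pt M (succ_pt M x) = x"
proof -
  let ?s = "succ_pt M x"
  let ?P = "\<lambda>y. y \<in> Mbar M \<and> y \<noteq> ?s \<and> (\<forall>z\<in>Mbar M. z \<noteq> ?s \<longrightarrow> ccw y ?s \<le> ccw z ?s)"
  have xn: "norm x = 1" using norm_Mbar M_Mbar x by blast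
  have sn: "norm ?s = 1" using norm_Mbar succ_M(1)[OF x] by blast
  have Px: "?P x"
  proof (intro conjI ballI impI)
    show "x \<in> Mbar M" using M_Mbar x .
    show "x \<noteq> ?s" using succ_M(2)[OF x] by simp
    fix z assume z: "z \<in> Mbar M" "z \<noteq> ?s"
    show "ccw x ?s \<le> ccw z ?s"
    proof (rule ccontr)
      assume c: "\<not> ccw x ?s \<le> ccw z ?s"
      have zn: "norm z = 1" using norm_Mbar z by blast
      have zx: "z \<noteq> x" using c by auto
      have nzs: "ccw z ?s \<noteq> 0" using ccw_eq0[OF zn sn] z(2) by blast
      have "ccw x ?s = (if ccw x z + ccw z ?s < 2 * pi then ccw x z + ccw z ?s else ccw x z + ccw z ?s - 2 * pi)"
        using ccw_add[OF xn zn sn] .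
      then have "ccw x z < ccw x ?s" using c nzs ccw_lt[of x z] ccw_ge0[of z ?s] ccw_ge0[of x z] ccw_lt[of z ?s]
        by (auto split: if_splits)
      moreover have "ccw x ?s \<le> ccw x z" using succ_M(3)[OF x z(1) zx] .
      ultimately show False by simp
    qed
  qed
  have uniq: "y = x" if "?P y" for y
  proof -
    have "ccw y ?s \<le> ccw x ?s" using Px that by blast
    moreover have "ccw x ?s \<le> ccw y ?s" using Px that by blast
    ultimately have "ccw y ?s = ccw x ?s" by simp
    moreover have "norm y = 1" using norm_Mbar that by auto
    ultimately show ?thesis using ccw_inj1[OF sn] xn by blast
  qed
  have "pred_pt M ?s = (THE y. ?P y)" unfolding pred_pt_def using succ_not_lim[OF x] by simp
  also have "\<dots> = x" using Px uniq by (rule the_equality)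
  finally show ?thesis .
qed


lemma unshift_pair: "arc_unshift M {u, v} = {succ_pt M u, succ_pt M v}"
  unfolding arc_unshift_def by simp

lemma arc_a: "a \<in> lim_pts M \<Longrightarrow> z \<in> Mbar M \<Longrightarrow> z \<noteq> a \<Longrightarrow> is_arc M {a, z}"
  unfolding is_arc_def using succ_lim pred_lim lim_Mbar by metis

lemma ccw_pos: "norm x = 1 \<Longrightarrow> norm y = 1 \<Longrightarrow> x \<noteq> y \<Longrightarrow> 0 < ccw x y"
  using ccw_eq0 ccw_ge0 by (metis less_eq_real_def)

lemma rot_lemma:
  assumes a: "a \<in> lim_pts M" and x: "x \<in> Mbar M" "x \<noteq> a" and y: "y \<in> Mbar M" "y \<noteq> a"
    and lt: "ccw a x < ccw a y"
  shows "hom_cond M {a, x} (arc_unshift M {a, y})"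
proof -
  have an: "norm a = 1" using norm_Mbar lim_Mbar a by blast
  have xn: "norm x = 1" using norm_Mbar x by blast
  have yn: "norm y = 1" using norm_Mbar y by blast
  let ?s = "succ_pt M y"
  have s: "?s \<in> Mbar M" using succ_M(1) succ_lim y(1) Mbar_cases by metis
  have sn: "norm ?s = 1" using norm_Mbar s by blast
  have tx: "0 < ccw a x" using ccw_pos an xn x(2) by metis
  have ta: "ccw a a = 0" using ccw_self[OF nz1[OF an]] .
  have ts: "ccw a x < ccw a ?s"
  proof (cases "y \<in> lim_pts M")
    case True then show ?thesis using lt succ_lim by simp
  next
    case False
    then have yM: "y \<in> M" using y Mbar_cases by blast
    have sa: "?s \<noteq> a" using succ_not_lim[OF yM] a by blast
    have sy: "?s \<noteq> y" using succ_M(2)[OF yM] .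
    have le: "ccw y ?s \<le> ccw y a" using succ_M(3)[OF yM] lim_Mbar[OF a] y(2) by blast
    have b1: "ccw y ?s = (if ccw a y \<le> ccw a ?s then ccw a ?s - ccw a y else ccw a ?s - ccw a y + 2 * pi)"
      using ccw_base[OF an yn sn] .
    have b2: "ccw y a = (if ccw a y \<le> ccw a a then ccw a a - ccw a y else ccw a a - ccw a y + 2 * pi)"
      using ccw_base[OF an yn an] .
    have "ccw a ?s \<noteq> 0" using ccw_eq0[OF an sn] sa by auto
    moreover have "ccw a ?s \<noteq> ccw a y" using ccw_inj2[OF an sn yn] sy by blast
    ultimately show ?thesis using b1 b2 le ta lt tx ccw_ge0[of a ?s] by (auto split: if_splits)
  qed
  have b3: "ccw x ?s = (if ccw a x \<le> ccw a ?s then ccw a ?s - ccw a x else ccw a ?s - ccw a x + 2 * pi)"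
    using ccw_base[OF an xn sn] .
  have b4: "ccw x a = (if ccw a x \<le> ccw a a then ccw a a - ccw a x else ccw a a - ccw a x + 2 * pi)"
    using ccw_base[OF an xn an] .
  have c1: "ccw x ?s < ccw x a" using b3 b4 ts ta tx ccw_lt[of a ?s] by auto
  have c2: "ccw x (succ_pt M x) \<le> ccw x ?s"
  proof (cases "x \<in> lim_pts M")
    case True then show ?thesis using succ_lim ccw_self xn ccw_ge0 by (metis norm_zero zero_neq_one)
  next
    case False
    then have xM: "x \<in> M" using x Mbar_cases by blast
    have "?s \<noteq> x" using ts by auto
    then show ?thesis using succ_M(3)[OF xM s] by blast
  qed
  have "ccw_rotation M {a, x} {a, ?s}" unfolding ccw_rotation_def using a c1 c2 by blast
  then show ?thesis unfolding hom_cond_def unshift_pair using succ_lim[OF a] by simp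
qed

lemma H2:
  assumes a: "a \<in> lim_pts M" and u: "u \<in> Mbar M" and v: "v \<in> Mbar M" and uv: "u \<noteq> v" "v \<noteq> succ_pt M u"
    and au: "a \<noteq> u" and av: "a \<noteq> v" and pos: "ccw v a < ccw v u"
  shows "\<exists>z\<in>Mbar M. z \<noteq> a \<and> (hom_cond M {u, v} (arc_unshift M {a, z}) \<or> hom_cond M {a, z} (arc_unshift M {u, v}))"
proof -
  have an: "norm a = 1" using norm_Mbar lim_Mbar a by blast
  have un: "norm u = 1" using norm_Mbar u by blast
  have vn: "norm v = 1" using norm_Mbar v by blast
  have tu: "ccw u u = 0" using ccw_self[OF nz1[OF un]] .
  have tv: "0 < ccw u v" using ccw_pos un vn uv(1) by blast
  have tav: "ccw u a \<noteq> ccw u v" using ccw_inj2[OF un an vn] av by blast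
  have b1: "ccw v a = (if ccw u v \<le> ccw u a then ccw u a - ccw u v else ccw u a - ccw u v + 2 * pi)"
    using ccw_base[OF un vn an] .
  have b2: "ccw v u = (if ccw u v \<le> ccw u u then ccw u u - ccw u v else ccw u u - ccw u v + 2 * pi)"
    using ccw_base[OF un vn un] .
  have ord: "ccw u v < ccw u a" using b1 b2 pos tu tv tav ccw_ge0[of u a] by (auto split: if_splits)
  have ta_lt: "ccw u a < 2 * pi" by (rule ccw_lt)
  show ?thesis
  proof (cases "u \<in> M")
    case True
    let ?s = "succ_pt M u"
    have s: "?s \<in> Mbar M" "?s \<noteq> u" using succ_M[OF True] by auto
    have sn: "norm ?s = 1" using norm_Mbar s by blast
    have le: "ccw u ?s \<le> ccw u v" using succ_M(3)[OF True v] uv(1) by auto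
    have ne: "ccw u ?s \<noteq> ccw u v" using ccw_inj2[OF un sn vn] uv(2) by auto
    have ps: "0 < ccw u ?s" using ccw_pos[OF un sn] s(2) by auto
    have "cyc_between u ?s v" unfolding cyc_between_def using le ne ps by simp
    moreover have "cyc_between v a u" unfolding cyc_between_def using pos ccw_pos[OF vn an] av by auto
    ultimately have "arcs_cross {u, v} {a, ?s}" unfolding arcs_cross_def
      by - (rule exI[of _ u], rule exI[of _ v], rule exI[of _ ?s], rule exI[of _ a], auto simp: insert_commute)
    then have hc: "hom_cond M {u, v} (arc_unshift M {a, u})" unfolding hom_cond_def unshift_pair using succ_lim[OF a] by simp
    show ?thesis apply (rule bexI[of _ u]) using hc u au by auto
  next
    case uM: False
    then have ul: "u \<in> lim_pts M" using u Mbar_cases by blast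
    show ?thesis
    proof (cases "v \<in> M")
      case True
      let ?t = "succ_pt M v"
      have t: "?t \<in> Mbar M" "?t \<noteq> v" using succ_M[OF True] by auto
      have ta: "?t \<noteq> a" using succ_not_lim[OF True] a by blast
      have tn: "norm ?t = 1" using norm_Mbar t by blast
      have le: "ccw v ?t \<le> ccw v a" using succ_M(3)[OF True] lim_Mbar[OF a] av by auto
      have ne: "ccw v ?t \<noteq> ccw v a" using ccw_inj2[OF vn tn an] ta by auto
      have c1: "cyc_between v ?t a" unfolding cyc_between_def using le ne ccw_pos[OF vn tn] t(2) by auto
      have b3: "ccw a u = (if ccw u a \<le> ccw u u then ccw u u - ccw u a else ccw u u - ccw u a + 2 * pi)"
        using ccw_base[OF un an un] .
      have b4: "ccw a v = (if ccw u a \<le> ccw u v then ccw u v - ccw u a else ccw u v - ccw u a + 2 * pi)"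
        using ccw_base[OF un an vn] .
      have c2: "cyc_between a u v" unfolding cyc_between_def using b3 b4 ord tu tv ta_lt by auto
      have "arcs_cross {a, v} {u, ?t}" unfolding arcs_cross_def
        apply (rule exI[of _ v], rule exI[of _ a], rule exI[of _ ?t], rule exI[of _ u])
        using c1 c2 by (auto simp: insert_commute)
      then have hc: "hom_cond M {a, v} (arc_unshift M {u, v})" unfolding hom_cond_def unshift_pair using succ_lim[OF ul] by simp
      show ?thesis apply (rule bexI[of _ v]) using hc v av by auto
    next
      case vM: False
      then have vl: "v \<in> lim_pts M" using v Mbar_cases by blast
      obtain m where m: "m \<in> M" "0 < ccw u m" "ccw u m < ccw u v" using approach_acw[OF ul tv] by blast
      have mn: "norm m = 1" using norm_Mbar M_Mbar m(1) by blast
      have ma: "m \<noteq> a" using M_not_lim m(1) a by blast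
      have b5: "ccw m v = (if ccw u m \<le> ccw u v then ccw u v - ccw u m else ccw u v - ccw u m + 2 * pi)"
        using ccw_base[OF un mn vn] .
      have b6: "ccw m a = (if ccw u m \<le> ccw u a then ccw u a - ccw u m else ccw u a - ccw u m + 2 * pi)"
        using ccw_base[OF un mn an] .
      have b3: "ccw a u = (if ccw u a \<le> ccw u u then ccw u u - ccw u a else ccw u u - ccw u a + 2 * pi)"
        using ccw_base[OF un an un] .
      have b7: "ccw a m = (if ccw u a \<le> ccw u m then ccw u m - ccw u a else ccw u m - ccw u a + 2 * pi)"
        using ccw_base[OF un an mn] .
      have c1: "cyc_between m v a" unfolding cyc_between_def using b5 b6 m ord by auto
      have c2: "cyc_between a u m" unfolding cyc_between_def using b3 b7 m ord tu ta_lt by auto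
      have "arcs_cross {a, m} {u, v}" unfolding arcs_cross_def
        apply (rule exI[of _ m], rule exI[of _ a], rule exI[of _ v], rule exI[of _ u])
        using c1 c2 by (auto simp: insert_commute)
      then have hc: "hom_cond M {a, m} (arc_unshift M {u, v})" unfolding hom_cond_def unshift_pair
        using succ_lim[OF ul] succ_lim[OF vl] by simp
      show ?thesis apply (rule bexI[of _ m]) using hc M_Mbar[OF m(1)] ma by auto
    qed
  qed
qed

lemma C2:
  assumes a: "a \<in> lim_pts M" and l: "is_arc M L"
  shows "\<exists>z\<in>Mbar M. z \<noteq> a \<and> (L = {a, z} \<or> hom_cond M L (arc_unshift M {a, z}) \<or> hom_cond M {a, z} (arc_unshift M L))"
proof -
  obtain p q where pq: "L = {p, q}" "p \<in> Mbar M" "q \<in> Mbar M" "q \<noteq> p" "q \<noteq> pred_pt M p" "q \<noteq> succ_pt M p"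
    using l unfolding is_arc_def by blast
  show ?thesis
  proof (cases "a \<in> {p, q}")
    case True
    then show ?thesis using pq by (auto simp: insert_commute)
  next
    case False
    then have ap: "a \<noteq> p" and aq: "a \<noteq> q" by auto
    have psq: "p \<noteq> succ_pt M q"
    proof
      assume e: "p = succ_pt M q"
      show False
      proof (cases "q \<in> M")
        case True
        then have "pred_pt M p = q" using e pred_succ by simp
        then show False using pq(5) by simp
      next
        case False
        then have "q \<in> lim_pts M" using pq(3) Mbar_cases by blast
        then show False using e succ_lim pq(4) by simp
      qed
    qed
    have an: "norm a = 1" using norm_Mbar lim_Mbar a by blast
    have pn: "norm p = 1" using norm_Mbar pq(2) by blast
    have qn: "norm q = 1" using norm_Mbar pq(3) by blast
    have ne: "ccw q a \<noteq> ccw q p" using ccw_inj2[OF qn an pn] ap by blast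
    show ?thesis
    proof (cases "ccw q a < ccw q p")
      case True
      then show ?thesis using H2[OF a pq(2) pq(3) pq(4)[symmetric] pq(6) ap aq] pq(1) by blast
    next
      case False
      then have gt: "ccw q p < ccw q a" using ne by simp
      have tq: "ccw q q = 0" using ccw_self[OF nz1[OF qn]] .
      have b1: "ccw p a = (if ccw q p \<le> ccw q a then ccw q a - ccw q p else ccw q a - ccw q p + 2 * pi)"
        using ccw_base[OF qn pn an] .
      have b2: "ccw p q = (if ccw q p \<le> ccw q q then ccw q q - ccw q p else ccw q q - ccw q p + 2 * pi)"
        using ccw_base[OF qn pn qn] .
      have "0 < ccw q p" using ccw_pos[OF qn pn] pq(4) by auto
      then have "ccw p a < ccw p q" using b1 b2 gt tq ccw_lt[of q a] by auto
      then have "\<exists>z\<in>Mbar M. z \<noteq> a \<and> (hom_cond M {q, p} (arc_unshift M {a, z}) \<or> hom_cond M {a, z} (arc_unshift M {q, p}))"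
        using H2[OF a pq(3) pq(2) pq(4) psq aq ap] by blast
      then show ?thesis using pq(1) by (auto simp: insert_commute)
    qed
  qed
qed

lemma arcs_connected:
  assumes n1: "n \<ge> 1"
    and cl: "\<forall>L L'. is_arc M L \<longrightarrow> is_arc M L' \<longrightarrow>
        (hom_cond M L (arc_unshift M L') \<or> hom_cond M L' (arc_unshift M L)) \<longrightarrow> L \<in> S \<longrightarrow> L' \<in> S"
    and l: "is_arc M L" and l': "is_arc M L'" and inS: "L \<in> S"
  shows "L' \<in> S"
proof -
  obtain a where a: "a \<in> lim_pts M" using lim_ne[OF n1] by blast
  have cl2: "L' \<in> S" if "is_arc M L" "is_arc M L'" "hom_cond M L (arc_unshift M L') \<or> hom_cond M L' (arc_unshift M L)" "L \<in> S" for L L'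
    using cl that by blast
  obtain x where x: "x \<in> Mbar M" "x \<noteq> a" "L = {a, x} \<or> hom_cond M L (arc_unshift M {a, x}) \<or> hom_cond M {a, x} (arc_unshift M L)"
    using C2[OF a l] by blast
  obtain y where y: "y \<in> Mbar M" "y \<noteq> a" "L' = {a, y} \<or> hom_cond M L' (arc_unshift M {a, y}) \<or> hom_cond M {a, y} (arc_unshift M L')"
    using C2[OF a l'] by blast
  have ax: "is_arc M {a, x}" using arc_a[OF a x(1) x(2)] .
  have ay: "is_arc M {a, y}" using arc_a[OF a y(1) y(2)] .
  have 1: "{a, x} \<in> S" using x(3) inS cl2[OF l ax] by blast
  have 2: "{a, y} \<in> S"
  proof (cases "x = y")
    case True then show ?thesis using 1 by simp
  next
    case False
    have an: "norm a = 1" using norm_Mbar lim_Mbar a by blast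
    have "ccw a x \<noteq> ccw a y" using ccw_inj2[OF an] norm_Mbar x(1) y(1) False by blast
    then have "ccw a x < ccw a y \<or> ccw a y < ccw a x" by linarith
    then show ?thesis
    proof
      assume "ccw a x < ccw a y"
      then have "hom_cond M {a, x} (arc_unshift M {a, y})" using rot_lemma[OF a x(1) x(2) y(1) y(2)] by blast
      then show ?thesis using cl2[OF ax ay] 1 by blast
    next
      assume "ccw a y < ccw a x"
      then have "hom_cond M {a, y} (arc_unshift M {a, x})" using rot_lemma[OF a y(1) y(2) x(1) x(2)] by blast
      then show ?thesis using cl2[OF ax ay] 1 by blast
    qed
  qed
  show ?thesis using y(3) 2 cl2[OF ay l'] by blast
qed
end


locale tc =
  fixes C :: "('o, 'm, 'k::field) tricat"
  assumes KL: "klinear_additive C" and TR: "triangulated C"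
begin
lemmas K_zer = KL[unfolded klinear_additive_def, THEN conjunct1]
lemmas K_id = KL[unfolded klinear_additive_def, THEN conjunct2, THEN conjunct1]
lemmas K_compin = KL[unfolded klinear_additive_def, THEN conjunct2, THEN conjunct2, THEN conjunct1]
lemmas K_assoc = KL[unfolded klinear_additive_def, THEN conjunct2, THEN conjunct2, THEN conjunct2, THEN conjunct1]
lemmas K_idlr = KL[unfolded klinear_additive_def, THEN conjunct2, THEN conjunct2, THEN conjunct2, THEN conjunct2, THEN conjunct1]
lemmas K_addin = KL[unfolded klinear_additive_def, THEN conjunct2, THEN conjunct2, THEN conjunct2, THEN conjunct2, THEN conjunct2, THEN conjunct1]
lemmas K_smin = KL[unfolded klinear_additive_def, THEN conjunct2, THEN conjunct2, THEN conjunct2, THEN conjunct2, THEN conjunct2, THEN conjunct2, THEN conjunct1]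
lemmas K_addassoc = KL[unfolded klinear_additive_def, THEN conjunct2, THEN conjunct2, THEN conjunct2, THEN conjunct2, THEN conjunct2, THEN conjunct2, THEN conjunct2, THEN conjunct1]
lemmas K_addcomm = KL[unfolded klinear_additive_def, THEN conjunct2, THEN conjunct2, THEN conjunct2, THEN conjunct2, THEN conjunct2, THEN conjunct2, THEN conjunct2, THEN conjunct2, THEN conjunct1]
lemmas K_addzero = KL[unfolded klinear_additive_def, THEN conjunct2, THEN conjunct2, THEN conjunct2, THEN conjunct2, THEN conjunct2, THEN conjunct2, THEN conjunct2, THEN conjunct2, THEN conjunct2, THEN conjunct1]
lemmas K_sm01 = KL[unfolded klinear_additive_def, THEN conjunct2, THEN conjunct2, THEN conjunct2, THEN conjunct2, THEN conjunct2, THEN conjunct2, THEN conjunct2, THEN conjunct2, THEN conjunct2, THEN conjunct2, THEN conjunct1]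
lemmas K_smadd = KL[unfolded klinear_additive_def, THEN conjunct2, THEN conjunct2, THEN conjunct2, THEN conjunct2, THEN conjunct2, THEN conjunct2, THEN conjunct2, THEN conjunct2, THEN conjunct2, THEN conjunct2, THEN conjunct2, THEN conjunct1]
lemmas K_smmult = KL[unfolded klinear_additive_def, THEN conjunct2, THEN conjunct2, THEN conjunct2, THEN conjunct2, THEN conjunct2, THEN conjunct2, THEN conjunct2, THEN conjunct2, THEN conjunct2, THEN conjunct2, THEN conjunct2, THEN conjunct2, THEN conjunct1]
lemmas K_smdist = KL[unfolded klinear_additive_def, THEN conjunct2, THEN conjunct2, THEN conjunct2, THEN conjunct2, THEN conjunct2, THEN conjunct2, THEN conjunct2, THEN conjunct2, THEN conjunct2, THEN conjunct2, THEN conjunct2, THEN conjunct2, THEN conjunct2, THEN conjunct1]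
lemmas K_compaddr = KL[unfolded klinear_additive_def, THEN conjunct2, THEN conjunct2, THEN conjunct2, THEN conjunct2, THEN conjunct2, THEN conjunct2, THEN conjunct2, THEN conjunct2, THEN conjunct2, THEN conjunct2, THEN conjunct2, THEN conjunct2, THEN conjunct2, THEN conjunct2, THEN conjunct1]
lemmas K_compaddl = KL[unfolded klinear_additive_def, THEN conjunct2, THEN conjunct2, THEN conjunct2, THEN conjunct2, THEN conjunct2, THEN conjunct2, THEN conjunct2, THEN conjunct2, THEN conjunct2, THEN conjunct2, THEN conjunct2, THEN conjunct2, THEN conjunct2, THEN conjunct2, THEN conjunct2, THEN conjunct1]
lemmas K_compsm = KL[unfolded klinear_additive_def, THEN conjunct2, THEN conjunct2, THEN conjunct2, THEN conjunct2, THEN conjunct2, THEN conjunct2, THEN conjunct2, THEN conjunct2, THEN conjunct2, THEN conjunct2, THEN conjunct2, THEN conjunct2, THEN conjunct2, THEN conjunct2, THEN conjunct2, THEN conjunct2, THEN conjunct1]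
lemmas K_zeroex = KL[unfolded klinear_additive_def, THEN conjunct2, THEN conjunct2, THEN conjunct2, THEN conjunct2, THEN conjunct2, THEN conjunct2, THEN conjunct2, THEN conjunct2, THEN conjunct2, THEN conjunct2, THEN conjunct2, THEN conjunct2, THEN conjunct2, THEN conjunct2, THEN conjunct2, THEN conjunct2, THEN conjunct2, THEN conjunct1]
lemmas K_biprodex = KL[unfolded klinear_additive_def, THEN conjunct2, THEN conjunct2, THEN conjunct2, THEN conjunct2, THEN conjunct2, THEN conjunct2, THEN conjunct2, THEN conjunct2, THEN conjunct2, THEN conjunct2, THEN conjunct2, THEN conjunct2, THEN conjunct2, THEN conjunct2, THEN conjunct2, THEN conjunct2, THEN conjunct2, THEN conjunct2, THEN conjunct1]
lemmas K_homfin = KL[unfolded klinear_additive_def, THEN conjunct2, THEN conjunct2, THEN conjunct2, THEN conjunct2, THEN conjunct2, THEN conjunct2, THEN conjunct2, THEN conjunct2, THEN conjunct2, THEN conjunct2, THEN conjunct2, THEN conjunct2, THEN conjunct2, THEN conjunct2, THEN conjunct2, THEN conjunct2, THEN conjunct2, THEN conjunct2, THEN conjunct2]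
lemmas T_shmin = TR[unfolded triangulated_def, THEN conjunct1]
lemmas T_shmcomp = TR[unfolded triangulated_def, THEN conjunct2, THEN conjunct1]
lemmas T_shmid = TR[unfolded triangulated_def, THEN conjunct2, THEN conjunct2, THEN conjunct1]
lemmas T_shmadd = TR[unfolded triangulated_def, THEN conjunct2, THEN conjunct2, THEN conjunct2, THEN conjunct1]
lemmas T_shmsm = TR[unfolded triangulated_def, THEN conjunct2, THEN conjunct2, THEN conjunct2, THEN conjunct2, THEN conjunct1]
lemmas T_shmbij = TR[unfolded triangulated_def, THEN conjunct2, THEN conjunct2, THEN conjunct2, THEN conjunct2, THEN conjunct2, THEN conjunct1]
lemmas T_ess = TR[unfolded triangulated_def, THEN conjunct2, THEN conjunct2, THEN conjunct2, THEN conjunct2, THEN conjunct2, THEN conjunct2, THEN conjunct1]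
lemmas T_istri = TR[unfolded triangulated_def, THEN conjunct2, THEN conjunct2, THEN conjunct2, THEN conjunct2, THEN conjunct2, THEN conjunct2, THEN conjunct2, THEN conjunct1]
lemmas T_TR1iso = TR[unfolded triangulated_def, THEN conjunct2, THEN conjunct2, THEN conjunct2, THEN conjunct2, THEN conjunct2, THEN conjunct2, THEN conjunct2, THEN conjunct2, THEN conjunct1]
lemmas T_TR1id = TR[unfolded triangulated_def, THEN conjunct2, THEN conjunct2, THEN conjunct2, THEN conjunct2, THEN conjunct2, THEN conjunct2, THEN conjunct2, THEN conjunct2, THEN conjunct2, THEN conjunct1]
lemmas T_TR1ex = TR[unfolded triangulated_def, THEN conjunct2, THEN conjunct2, THEN conjunct2, THEN conjunct2, THEN conjunct2, THEN conjunct2, THEN conjunct2, THEN conjunct2, THEN conjunct2, THEN conjunct2, THEN conjunct1]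
lemmas T_TR2 = TR[unfolded triangulated_def, THEN conjunct2, THEN conjunct2, THEN conjunct2, THEN conjunct2, THEN conjunct2, THEN conjunct2, THEN conjunct2, THEN conjunct2, THEN conjunct2, THEN conjunct2, THEN conjunct2, THEN conjunct1]
lemmas T_TR3 = TR[unfolded triangulated_def, THEN conjunct2, THEN conjunct2, THEN conjunct2, THEN conjunct2, THEN conjunct2, THEN conjunct2, THEN conjunct2, THEN conjunct2, THEN conjunct2, THEN conjunct2, THEN conjunct2, THEN conjunct2, THEN conjunct1]
lemmas T_TR4 = TR[unfolded triangulated_def, THEN conjunct2, THEN conjunct2, THEN conjunct2, THEN conjunct2, THEN conjunct2, THEN conjunct2, THEN conjunct2, THEN conjunct2, THEN conjunct2, THEN conjunct2, THEN conjunct2, THEN conjunct2, THEN conjunct2]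

lemma zer_in[simp,intro]: "zer C X Y \<in> Hom C X Y" using K_zer by blast
lemma id_in[simp,intro]: "idm C X \<in> Hom C X X" using K_id by blast
lemma comp_in[intro]: "f \<in> Hom C X Y \<Longrightarrow> g \<in> Hom C Y Z \<Longrightarrow> comp C g f \<in> Hom C X Z"
  using K_compin by blast
lemma assoc: "f \<in> Hom C X Y \<Longrightarrow> g \<in> Hom C Y Z \<Longrightarrow> h \<in> Hom C Z W \<Longrightarrow>
   comp C h (comp C g f) = comp C (comp C h g) f" using K_assoc by blast
lemma id_l: "f \<in> Hom C X Y \<Longrightarrow> comp C (idm C Y) f = f" using K_idlr by blast
lemma id_r: "f \<in> Hom C X Y \<Longrightarrow> comp C f (idm C X) = f" using K_idlr by blast
lemma add_in[intro]: "f \<in> Hom C X Y \<Longrightarrow> g \<in> Hom C X Y \<Longrightarrow> add C f g \<in> Hom C X Y"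
  using K_addin by blast
lemma sm_in[intro]: "f \<in> Hom C X Y \<Longrightarrow> sm C a f \<in> Hom C X Y"
  using K_smin by blast
lemma add_assoc: "f \<in> Hom C X Y \<Longrightarrow> g \<in> Hom C X Y \<Longrightarrow> h \<in> Hom C X Y \<Longrightarrow>
   add C (add C f g) h = add C f (add C g h)" using K_addassoc by blast
lemma add_comm: "f \<in> Hom C X Y \<Longrightarrow> g \<in> Hom C X Y \<Longrightarrow> add C f g = add C g f"
  using K_addcomm by blast
lemma add_zer: "f \<in> Hom C X Y \<Longrightarrow> add C f (zer C X Y) = f" using K_addzero by blast
lemma sm_0: "f \<in> Hom C X Y \<Longrightarrow> sm C 0 f = zer C X Y" using K_sm01 by blast
lemma sm_1: "f \<in> Hom C X Y \<Longrightarrow> sm C 1 f = f" using K_sm01 by blast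
lemma sm_add: "f \<in> Hom C X Y \<Longrightarrow> sm C (a + b) f = add C (sm C a f) (sm C b f)"
  using K_smadd by blast
lemma sm_mult: "f \<in> Hom C X Y \<Longrightarrow> sm C (a * b) f = sm C a (sm C b f)"
  using K_smmult by blast
lemma sm_dist: "f \<in> Hom C X Y \<Longrightarrow> g \<in> Hom C X Y \<Longrightarrow> sm C a (add C f g) = add C (sm C a f) (sm C a g)"
  using K_smdist by blast
lemma comp_add_r: "f \<in> Hom C X Y \<Longrightarrow> f' \<in> Hom C X Y \<Longrightarrow> g \<in> Hom C Y Z \<Longrightarrow>
   comp C g (add C f f') = add C (comp C g f) (comp C g f')" using K_compaddr by blast
lemma comp_add_l: "f \<in> Hom C X Y \<Longrightarrow> g \<in> Hom C Y Z \<Longrightarrow> g' \<in> Hom C Y Z \<Longrightarrow>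
   comp C (add C g g') f = add C (comp C g f) (comp C g' f)" using K_compaddl by blast
lemma comp_sm_l: "f \<in> Hom C X Y \<Longrightarrow> g \<in> Hom C Y Z \<Longrightarrow> comp C (sm C a g) f = sm C a (comp C g f)"
  using K_compsm by blast
lemma comp_sm_r: "f \<in> Hom C X Y \<Longrightarrow> g \<in> Hom C Y Z \<Longrightarrow> comp C g (sm C a f) = sm C a (comp C g f)"
  using K_compsm by blast

lemma zer_add: "f \<in> Hom C X Y \<Longrightarrow> add C (zer C X Y) f = f"
  using add_comm add_zer zer_in by metis
lemma comp_zer_l: "f \<in> Hom C X Y \<Longrightarrow> comp C (zer C Y Z) f = zer C X Z"
  by (metis comp_sm_l sm_0 zer_in comp_in)
lemma comp_zer_r: "g \<in> Hom C Y Z \<Longrightarrow> comp C g (zer C X Y) = zer C X Z"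
  by (metis comp_sm_r sm_0 zer_in comp_in)
lemma sm_zer: "sm C a (zer C X Y) = zer C X Y"
  by (metis mult_zero_right sm_0 sm_mult zer_in)
lemma add_neg: "f \<in> Hom C X Y \<Longrightarrow> add C f (sm C (-1) f) = zer C X Y"
proof -
  assume f: "f \<in> Hom C X Y"
  have "add C f (sm C (-1) f) = add C (sm C 1 f) (sm C (-1) f)" using f sm_1 by simp
  also have "\<dots> = sm C (1 + -1) f" using sm_add[OF f, of 1 "-1"] by simp
  also have "\<dots> = zer C X Y" using sm_0 f by simp
  finally show ?thesis .
qed
lemma neg_neg: "f \<in> Hom C X Y \<Longrightarrow> sm C (-1) (sm C (-1) f) = f"
  by (metis mult_minus1 minus_minus sm_1 sm_mult)


definition "cmp X Y Z g f = comp C g f"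
definition "ad X Y f g = add C f g"
definition "sc X Y a f = sm C a f"

lemma cmp_in[simp]: "f \<in> Hom C X Y \<Longrightarrow> g \<in> Hom C Y Z \<Longrightarrow> cmp X Y Z g f \<in> Hom C X Z"
  unfolding cmp_def by (rule comp_in)
lemma ad_in[simp]: "f \<in> Hom C X Y \<Longrightarrow> g \<in> Hom C X Y \<Longrightarrow> ad X Y f g \<in> Hom C X Y"
  unfolding ad_def by (rule add_in)
lemma sc_in[simp]: "f \<in> Hom C X Y \<Longrightarrow> sc X Y a f \<in> Hom C X Y"
  unfolding sc_def by (rule sm_in)
lemma cmp_assoc[simp]: "f \<in> Hom C X Y \<Longrightarrow> g \<in> Hom C Y Z \<Longrightarrow> h \<in> Hom C Z W \<Longrightarrow>
   cmp X Y W (cmp Y Z W h g) f = cmp X Z W h (cmp X Y Z g f)"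
  unfolding cmp_def using assoc by metis
lemma cmp_id_l[simp]: "f \<in> Hom C X Y \<Longrightarrow> cmp X Y Y (idm C Y) f = f"
  unfolding cmp_def by (rule id_l)
lemma cmp_id_r[simp]: "f \<in> Hom C X Y \<Longrightarrow> cmp X X Y f (idm C X) = f"
  unfolding cmp_def by (rule id_r)
lemma cmp_zer_l[simp]: "f \<in> Hom C X Y \<Longrightarrow> cmp X Y Z (zer C Y Z) f = zer C X Z"
  unfolding cmp_def by (rule comp_zer_l)
lemma cmp_zer_r[simp]: "g \<in> Hom C Y Z \<Longrightarrow> cmp X Y Z g (zer C X Y) = zer C X Z"
  unfolding cmp_def by (rule comp_zer_r)
lemma cmp_ad_r[simp]: "f \<in> Hom C X Y \<Longrightarrow> f' \<in> Hom C X Y \<Longrightarrow> g \<in> Hom C Y Z \<Longrightarrow>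
   cmp X Y Z g (ad X Y f f') = ad X Z (cmp X Y Z g f) (cmp X Y Z g f')"
  unfolding cmp_def ad_def by (rule comp_add_r)
lemma cmp_ad_l[simp]: "f \<in> Hom C X Y \<Longrightarrow> g \<in> Hom C Y Z \<Longrightarrow> g' \<in> Hom C Y Z \<Longrightarrow>
   cmp X Y Z (ad Y Z g g') f = ad X Z (cmp X Y Z g f) (cmp X Y Z g' f)"
  unfolding cmp_def ad_def by (rule comp_add_l)
lemma cmp_sc_l[simp]: "f \<in> Hom C X Y \<Longrightarrow> g \<in> Hom C Y Z \<Longrightarrow>
   cmp X Y Z (sc Y Z a g) f = sc X Z a (cmp X Y Z g f)"
  unfolding cmp_def sc_def by (rule comp_sm_l)
lemma cmp_sc_r[simp]: "f \<in> Hom C X Y \<Longrightarrow> g \<in> Hom C Y Z \<Longrightarrow>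
   cmp X Y Z g (sc X Y a f) = sc X Z a (cmp X Y Z g f)"
  unfolding cmp_def sc_def by (rule comp_sm_r)
lemma ad_zer_r[simp]: "f \<in> Hom C X Y \<Longrightarrow> ad X Y f (zer C X Y) = f"
  unfolding ad_def by (rule add_zer)
lemma ad_zer_l[simp]: "f \<in> Hom C X Y \<Longrightarrow> ad X Y (zer C X Y) f = f"
  unfolding ad_def by (rule zer_add)
lemma sc_zer[simp]: "sc X Y a (zer C X Y) = zer C X Y"
  unfolding sc_def by (rule sm_zer)
lemma sc_0[simp]: "f \<in> Hom C X Y \<Longrightarrow> sc X Y 0 f = zer C X Y"
  unfolding sc_def by (rule sm_0)
lemma sc_1[simp]: "f \<in> Hom C X Y \<Longrightarrow> sc X Y 1 f = f"
  unfolding sc_def by (rule sm_1)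
lemma sc_sc[simp]: "f \<in> Hom C X Y \<Longrightarrow> sc X Y a (sc X Y b f) = sc X Y (a * b) f"
  unfolding sc_def by (rule sm_mult[symmetric])
lemma sc_ad[simp]: "f \<in> Hom C X Y \<Longrightarrow> g \<in> Hom C X Y \<Longrightarrow>
   sc X Y a (ad X Y f g) = ad X Y (sc X Y a f) (sc X Y a g)"
  unfolding sc_def ad_def by (rule sm_dist)
lemma ad_assoc[simp]: "f \<in> Hom C X Y \<Longrightarrow> g \<in> Hom C X Y \<Longrightarrow> h \<in> Hom C X Y \<Longrightarrow>
   ad X Y (ad X Y f g) h = ad X Y f (ad X Y g h)"
  unfolding ad_def by (rule add_assoc)
lemma ad_comm: "f \<in> Hom C X Y \<Longrightarrow> g \<in> Hom C X Y \<Longrightarrow> ad X Y f g = ad X Y g f"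
  unfolding ad_def by (rule add_comm)
lemma ad_lcomm: "f \<in> Hom C X Y \<Longrightarrow> g \<in> Hom C X Y \<Longrightarrow> h \<in> Hom C X Y \<Longrightarrow>
   ad X Y f (ad X Y g h) = ad X Y g (ad X Y f h)"
  by (metis ad_assoc ad_comm)
lemma ad_neg[simp]: "f \<in> Hom C X Y \<Longrightarrow> ad X Y f (sc X Y (-1) f) = zer C X Y"
  unfolding ad_def sc_def by (rule add_neg)
lemma ad_neg2[simp]: "f \<in> Hom C X Y \<Longrightarrow> g \<in> Hom C X Y \<Longrightarrow> ad X Y f (ad X Y (sc X Y (-1) f) g) = g"
  by (metis ad_assoc ad_neg ad_zer_l sc_in)
lemma ad_neg3[simp]: "f \<in> Hom C X Y \<Longrightarrow> ad X Y (sc X Y (-1) f) f = zer C X Y"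
  by (metis ad_comm ad_neg sc_in)
lemma ad_cancel[simp]: "e \<in> Hom C X Y \<Longrightarrow> f \<in> Hom C X Y \<Longrightarrow> ad X Y e (ad X Y f (sc X Y (-1) e)) = f"
  by (metis ad_assoc ad_comm ad_neg ad_zer_r sc_in)
lemma ad_neg4[simp]: "f \<in> Hom C X Y \<Longrightarrow> g \<in> Hom C X Y \<Longrightarrow> ad X Y (sc X Y (-1) f) (ad X Y f g) = g"
  by (metis ad_assoc ad_neg3 ad_zer_l sc_in)


lemma cmp_idc: "cmp A B A r j = idm C A \<Longrightarrow> x \<in> Hom C X A \<Longrightarrow> j \<in> Hom C A B \<Longrightarrow> r \<in> Hom C B A \<Longrightarrow>
   cmp X B A r (cmp X A B j x) = x"
  by (metis cmp_assoc cmp_id_l)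
lemma cmp_zc: "cmp A B D r j = zer C A D \<Longrightarrow> x \<in> Hom C X A \<Longrightarrow> j \<in> Hom C A B \<Longrightarrow> r \<in> Hom C B D \<Longrightarrow>
   cmp X B D r (cmp X A B j x) = zer C X D"
  by (metis cmp_assoc cmp_zer_l)

definition "shf X Y f = shm C f"

lemma shf_in[simp]: "f \<in> Hom C X Y \<Longrightarrow> shf X Y f \<in> Hom C (sh C X) (sh C Y)"
  unfolding shf_def using T_shmin by blast
lemma shm_in: "f \<in> Hom C X Y \<Longrightarrow> shm C f \<in> Hom C (sh C X) (sh C Y)"
  using T_shmin by blast
lemma shf_cmp[simp]: "f \<in> Hom C X Y \<Longrightarrow> g \<in> Hom C Y Z \<Longrightarrow>
  shf X Z (cmp X Y Z g f) = cmp (sh C X) (sh C Y) (sh C Z) (shf Y Z g) (shf X Y f)"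
  unfolding shf_def cmp_def using T_shmcomp by blast
lemma shf_id[simp]: "shf X X (idm C X) = idm C (sh C X)"
  unfolding shf_def using T_shmid by blast
lemma shf_ad[simp]: "f \<in> Hom C X Y \<Longrightarrow> g \<in> Hom C X Y \<Longrightarrow>
  shf X Y (ad X Y f g) = ad (sh C X) (sh C Y) (shf X Y f) (shf X Y g)"
  unfolding shf_def ad_def using T_shmadd by blast
lemma shf_sc[simp]: "f \<in> Hom C X Y \<Longrightarrow> shf X Y (sc X Y a f) = sc (sh C X) (sh C Y) a (shf X Y f)"
  unfolding shf_def sc_def using T_shmsm by blast
lemma shf_zer[simp]: "shf X Y (zer C X Y) = zer C (sh C X) (sh C Y)"
proof -
  have "shf X Y (zer C X Y) = shf X Y (sc X Y 0 (zer C X Y))" by simp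
  also have "\<dots> = zer C (sh C X) (sh C Y)" by (simp del: sc_0 sc_zer) (simp)
  finally show ?thesis .
qed
lemma shf_bij: "bij_betw (shf X Y) (Hom C X Y) (Hom C (sh C X) (sh C Y))"
  unfolding shf_def using T_shmbij by (simp add: eta_contract_eq)
lemma shf_inj: "f \<in> Hom C X Y \<Longrightarrow> g \<in> Hom C X Y \<Longrightarrow> shf X Y f = shf X Y g \<Longrightarrow> f = g"
  using shf_bij[of X Y] unfolding bij_betw_def inj_on_def by blast
lemma shf_surj: "g \<in> Hom C (sh C X) (sh C Y) \<Longrightarrow> \<exists>f\<in>Hom C X Y. g = shf X Y f"
  using shf_bij[of X Y] unfolding bij_betw_def by blast
lemma ess: "\<exists>X. isomorphic C (sh C X) Y"
  using T_ess by blast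

lemma is_iso_t: "is_iso C X Y f \<longleftrightarrow> f \<in> Hom C X Y \<and>
   (\<exists>g\<in>Hom C Y X. cmp X Y X g f = idm C X \<and> cmp Y X Y f g = idm C Y)"
  unfolding is_iso_def cmp_def by blast

lemma iso_id: "is_iso C X X (idm C X)"
  unfolding is_iso_t by (intro conjI bexI[of _ "idm C X"]) simp_all

lemma isomorphic_refl: "isomorphic C X X"
  unfolding isomorphic_def using iso_id by blast

lemma isomorphic_sym: "isomorphic C X Y \<Longrightarrow> isomorphic C Y X"
  unfolding isomorphic_def is_iso_t by blast

lemma iso_comp: "is_iso C X Y f \<Longrightarrow> is_iso C Y Z g \<Longrightarrow> is_iso C X Z (cmp X Y Z g f)"
proof -
  assume f: "is_iso C X Y f" and g: "is_iso C Y Z g"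
  from f obtain f' where f1: "f \<in> Hom C X Y" "f' \<in> Hom C Y X" "cmp X Y X f' f = idm C X" "cmp Y X Y f f' = idm C Y"
    unfolding is_iso_t by blast
  from g obtain g' where g1: "g \<in> Hom C Y Z" "g' \<in> Hom C Z Y" "cmp Y Z Y g' g = idm C Y" "cmp Z Y Z g g' = idm C Z"
    unfolding is_iso_t by blast
  show ?thesis unfolding is_iso_t
    apply (intro conjI bexI[of _ "cmp Z Y X f' g'"])
    using f1 g1 by (simp_all add: cmp_idc)
qed

lemma isomorphic_trans: "isomorphic C X Y \<Longrightarrow> isomorphic C Y Z \<Longrightarrow> isomorphic C X Z"
  unfolding isomorphic_def using iso_comp by blast

lemma iso_sh: "is_iso C X Y f \<Longrightarrow> is_iso C (sh C X) (sh C Y) (shf X Y f)"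
proof -
  assume f: "is_iso C X Y f"
  from f obtain f' where f1: "f \<in> Hom C X Y" "f' \<in> Hom C Y X" "cmp X Y X f' f = idm C X" "cmp Y X Y f f' = idm C Y"
    unfolding is_iso_t by blast
  show ?thesis unfolding is_iso_t
    apply (intro conjI bexI[of _ "shf Y X f'"])
    using f1 by (simp_all flip: shf_cmp)
qed

lemma isomorphic_sh: "isomorphic C X Y \<Longrightarrow> isomorphic C (sh C X) (sh C Y)"
  unfolding isomorphic_def using iso_sh by blast

lemma isomorphic_unsh: "isomorphic C (sh C X) (sh C Y) \<Longrightarrow> isomorphic C X Y"
proof -
  assume "isomorphic C (sh C X) (sh C Y)"
  then obtain g g' where g: "g \<in> Hom C (sh C X) (sh C Y)" "g' \<in> Hom C (sh C Y) (sh C X)"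
    "cmp (sh C X) (sh C Y) (sh C X) g' g = idm C (sh C X)" "cmp (sh C Y) (sh C X) (sh C Y) g g' = idm C (sh C Y)"
    unfolding isomorphic_def is_iso_t by blast
  obtain f where f: "f \<in> Hom C X Y" "g = shf X Y f" using shf_surj g(1) by blast
  obtain f' where f': "f' \<in> Hom C Y X" "g' = shf Y X f'" using shf_surj g(2) by blast
  have "shf X X (cmp X Y X f' f) = shf X X (idm C X)" using g f f' by simp
  then have 1: "cmp X Y X f' f = idm C X" using shf_inj f f' by (meson cmp_in id_in)
  have "shf Y Y (cmp Y X Y f f') = shf Y Y (idm C Y)" using g f f' by simp
  then have 2: "cmp Y X Y f f' = idm C Y" using shf_inj f f' by (meson cmp_in id_in)
  show ?thesis unfolding isomorphic_def is_iso_t using 1 2 f f' by blast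
qed

definition "nz X Y \<longleftrightarrow> (\<exists>f\<in>Hom C X Y. f \<noteq> zer C X Y)"

lemma not_nz: "\<not> nz X Y \<Longrightarrow> f \<in> Hom C X Y \<Longrightarrow> f = zer C X Y"
  unfolding nz_def by blast

lemma nz_iso: "nz X Y \<Longrightarrow> isomorphic C X X' \<Longrightarrow> isomorphic C Y Y' \<Longrightarrow> nz X' Y'"
proof -
  assume n: "nz X Y" and i1: "isomorphic C X X'" and i2: "isomorphic C Y Y'"
  from n obtain f where f: "f \<in> Hom C X Y" "f \<noteq> zer C X Y" unfolding nz_def by blast
  from i1 obtain a a' where a: "a \<in> Hom C X X'" "a' \<in> Hom C X' X" "cmp X X' X a' a = idm C X"
    unfolding isomorphic_def is_iso_t by blast
  from i2 obtain b b' where b: "b \<in> Hom C Y Y'" "b' \<in> Hom C Y' Y" "cmp Y Y' Y b' b = idm C Y"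
    unfolding isomorphic_def is_iso_t by blast
  let ?g = "cmp X' Y Y' b (cmp X' X Y f a')"
  have g: "?g \<in> Hom C X' Y'" using a b f by simp
  have e: "cmp X X' Y (cmp X' Y' Y b' ?g) a = f" using a b f by (simp add: cmp_idc)
  have "?g \<noteq> zer C X' Y'"
  proof
    assume "?g = zer C X' Y'"
    then have "f = cmp X X' Y (cmp X' Y' Y b' (zer C X' Y')) a" using e by simp
    then show False using f a b by simp
  qed
  then show ?thesis unfolding nz_def using g by blast
qed

lemma nz_sh: "nz (sh C X) (sh C Y) \<longleftrightarrow> nz X Y"
proof
  assume "nz (sh C X) (sh C Y)"
  then obtain g where g: "g \<in> Hom C (sh C X) (sh C Y)" "g \<noteq> zer C (sh C X) (sh C Y)" unfolding nz_def by blast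
  then obtain f where "f \<in> Hom C X Y" "g = shf X Y f" using shf_surj by blast
  then show "nz X Y" unfolding nz_def using g by (metis shf_zer)
next
  assume "nz X Y"
  then obtain f where f: "f \<in> Hom C X Y" "f \<noteq> zer C X Y" unfolding nz_def by blast
  then have "shf X Y f \<noteq> zer C (sh C X) (sh C Y)" using shf_inj[of f X Y "zer C X Y"] by auto
  then show "nz (sh C X) (sh C Y)" unfolding nz_def using f by auto
qed

lemma zero_obj_iff: "zero_obj C Z \<longleftrightarrow> idm C Z = zer C Z Z"
proof
  assume "zero_obj C Z" then show "idm C Z = zer C Z Z" unfolding zero_obj_def using id_in by blast
next
  assume z: "idm C Z = zer C Z Z"
  have "Hom C Z X = {zer C Z X}" for X
  proof -
    have "f = zer C Z X" if "f \<in> Hom C Z X" for f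
      using cmp_id_r[OF that] z that by simp
    then show ?thesis by auto
  qed
  moreover have "Hom C X Z = {zer C X Z}" for X
  proof -
    have "f = zer C X Z" if "f \<in> Hom C X Z" for f
      using cmp_id_l[OF that] z that by simp
    then show ?thesis by auto
  qed
  ultimately show "zero_obj C Z" unfolding zero_obj_def by blast
qed

lemma zero_not_nz: "zero_obj C X \<longleftrightarrow> \<not> nz X X"
proof
  assume "zero_obj C X" then show "\<not> nz X X" unfolding zero_obj_def nz_def by blast
next
  assume "\<not> nz X X" then show "zero_obj C X" unfolding zero_obj_iff using not_nz id_in by blast
qed

lemma zero_hom1: "zero_obj C Z \<Longrightarrow> \<not> nz Z X"
  unfolding zero_obj_def nz_def by blast
lemma zero_hom2: "zero_obj C Z \<Longrightarrow> \<not> nz X Z"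
  unfolding zero_obj_def nz_def by blast

lemma zero_iso: "zero_obj C Z \<Longrightarrow> isomorphic C Z Z' \<Longrightarrow> zero_obj C Z'"
  using zero_not_nz nz_iso isomorphic_sym by metis

lemma zero_sh: "zero_obj C (sh C X) \<longleftrightarrow> zero_obj C X"
  using zero_not_nz nz_sh by metis

lemma zero_ex: "\<exists>Z. zero_obj C Z" using K_zeroex by blast

lemma dtri_in: "(X, Y, Z, f, g, h) \<in> dtri C \<Longrightarrow> f \<in> Hom C X Y \<and> g \<in> Hom C Y Z \<and> h \<in> Hom C Z (sh C X)"
  using T_istri unfolding is_tri_def by fastforce
lemma dtri_id: "zero_obj C Z \<Longrightarrow> (X, X, Z, idm C X, zer C X Z, zer C Z (sh C X)) \<in> dtri C"
  using T_TR1id by blast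
lemma dtri_ex: "f \<in> Hom C X Y \<Longrightarrow> \<exists>Z g h. (X, Y, Z, f, g, h) \<in> dtri C"
  using T_TR1ex by blast
lemma dtri_rot: "(X, Y, Z, f, g, h) \<in> dtri C \<Longrightarrow> (Y, Z, sh C X, g, h, sc (sh C X) (sh C Y) (-1) (shf X Y f)) \<in> dtri C"
  unfolding sc_def shf_def using T_TR2 by blast
lemma dtri_mor: "(X, Y, Z, f, g, h) \<in> dtri C \<Longrightarrow> (X', Y', Z', f', g', h') \<in> dtri C \<Longrightarrow>
        a \<in> Hom C X X' \<Longrightarrow> b \<in> Hom C Y Y' \<Longrightarrow> cmp X Y Y' b f = cmp X X' Y' f' a \<Longrightarrow>
        (\<exists>c\<in>Hom C Z Z'. cmp Y Z Z' c g = cmp Y Y' Z' g' b \<and>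
            cmp Z (sh C X) (sh C X') (shf X X' a) h = cmp Z Z' (sh C X') h' c)"
proof -
  assume as: "(X, Y, Z, f, g, h) \<in> dtri C" "(X', Y', Z', f', g', h') \<in> dtri C"
        "a \<in> Hom C X X'" "b \<in> Hom C Y Y'" "cmp X Y Y' b f = cmp X X' Y' f' a"
  then obtain c where "tri_mor C (X, Y, Z, f, g, h) (X', Y', Z', f', g', h') a b c"
    using T_TR3 unfolding cmp_def by blast
  then show ?thesis unfolding tri_mor_def cmp_def shf_def by auto
qed


lemma exact_cov:
  assumes T: "(P, Q, R, al, be, ga) \<in> dtri C" and u: "u \<in> Hom C W Q"
    and z: "cmp W Q R be u = zer C W R"
  shows "\<exists>v\<in>Hom C W P. u = cmp W P Q al v"
proof -
  obtain Z0 where Z0: "zero_obj C Z0" using zero_ex by blast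
  have T0: "(W, Z0, sh C W, zer C W Z0, zer C Z0 (sh C W), sc (sh C W) (sh C W) (-1) (shf W W (idm C W))) \<in> dtri C"
    using dtri_rot[OF dtri_id[OF Z0]] by simp
  have T1: "(Q, R, sh C P, be, ga, sc (sh C P) (sh C Q) (-1) (shf P Q al)) \<in> dtri C"
    using dtri_rot[OF T] .
  have m: "al \<in> Hom C P Q" "be \<in> Hom C Q R" "ga \<in> Hom C R (sh C P)" using dtri_in[OF T] by auto
  have "cmp W Z0 R (zer C Z0 R) (zer C W Z0) = cmp W Q R be u" using z by simp
  then obtain c where c: "c \<in> Hom C (sh C W) (sh C P)" and
    eq: "cmp (sh C W) (sh C W) (sh C Q) (shf W Q u) (sc (sh C W) (sh C W) (-1) (shf W W (idm C W)))
       = cmp (sh C W) (sh C P) (sh C Q) (sc (sh C P) (sh C Q) (-1) (shf P Q al)) c"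
    using dtri_mor[OF T0 T1 u zer_in] by blast
  from eq have "sc (sh C W) (sh C Q) (-1) (shf W Q u) = sc (sh C W) (sh C Q) (-1) (cmp (sh C W) (sh C P) (sh C Q) (shf P Q al) c)"
    using u c m by simp
  then have "sc (sh C W) (sh C Q) (-1) (sc (sh C W) (sh C Q) (-1) (shf W Q u)) = sc (sh C W) (sh C Q) (-1) (sc (sh C W) (sh C Q) (-1) (cmp (sh C W) (sh C P) (sh C Q) (shf P Q al) c))"
    by simp
  then have e2: "shf W Q u = cmp (sh C W) (sh C P) (sh C Q) (shf P Q al) c" using u c m by simp
  obtain v where v: "v \<in> Hom C W P" "c = shf W P v" using shf_surj c by blast
  have "shf W Q u = shf W Q (cmp W P Q al v)" using e2 v m by simp
  then have "u = cmp W P Q al v" using shf_inj u v m by (meson cmp_in)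
  then show ?thesis using v by blast
qed

lemma exact_contra:
  assumes T: "(P, Q, R, al, be, ga) \<in> dtri C" and u: "u \<in> Hom C Q W"
    and z: "cmp P Q W u al = zer C P W"
  shows "\<exists>v\<in>Hom C R W. u = cmp Q R W v be"
proof -
  obtain Z0 where Z0: "zero_obj C Z0" using zero_ex by blast
  obtain U where "isomorphic C (sh C U) W" using ess by blast
  then obtain ph ps where ph: "ph \<in> Hom C (sh C U) W" "ps \<in> Hom C W (sh C U)"
     "cmp W (sh C U) W ph ps = idm C W"
    unfolding isomorphic_def is_iso_t by blast
  have T2: "(Z0, sh C U, sh C U, zer C Z0 (sh C U), sc (sh C U) (sh C U) (-1) (shf U U (idm C U)),
        sc (sh C U) (sh C Z0) (-1) (shf U Z0 (zer C U Z0))) \<in> dtri C"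
    using dtri_rot[OF dtri_rot[OF dtri_id[OF Z0]]] by simp
  have m: "al \<in> Hom C P Q" "be \<in> Hom C Q R" "ga \<in> Hom C R (sh C P)" using dtri_in[OF T] by auto
  let ?b = "cmp Q W (sh C U) ps u"
  have b: "?b \<in> Hom C Q (sh C U)" using ph u by simp
  have "cmp P Q (sh C U) ?b al = cmp P Z0 (sh C U) (zer C Z0 (sh C U)) (zer C P Z0)"
    using z ph u m by simp
  then obtain c where c: "c \<in> Hom C R (sh C U)" and
    eq: "cmp Q R (sh C U) c be = cmp Q (sh C U) (sh C U) (sc (sh C U) (sh C U) (-1) (shf U U (idm C U))) ?b"
    using dtri_mor[OF T T2 zer_in b] by blast
  have eq2: "cmp Q R (sh C U) c be = sc Q (sh C U) (-1) ?b" using eq ph u by simp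
  let ?v = "cmp R (sh C U) W ph (sc R (sh C U) (-1) c)"
  have "cmp Q R W ?v be = u" using eq2 ph u c m by (simp add: cmp_idc)
  moreover have "?v \<in> Hom C R W" using ph c by simp
  ultimately show ?thesis by metis
qed

lemma endo_iso:
  assumes T: "(X, Y, Z, f, g, h) \<in> dtri C" and c: "c \<in> Hom C Z Z"
    and cg: "cmp Y Z Z c g = g" and hc: "cmp Z Z (sh C X) h c = h"
  shows "is_iso C Z Z c"
proof -
  have m: "f \<in> Hom C X Y" "g \<in> Hom C Y Z" "h \<in> Hom C Z (sh C X)" using dtri_in[OF T] by auto
  define N where "N = ad Z Z (idm C Z) (sc Z Z (-1) c)"
  have N: "N \<in> Hom C Z Z" unfolding N_def using c by simp
  have hN: "cmp Z Z (sh C X) h N = zer C Z (sh C X)" unfolding N_def using c m hc by simp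
  obtain v where v: "v \<in> Hom C Z Y" "N = cmp Z Y Z g v"
    using exact_cov[OF dtri_rot[OF T] N hN] by blast
  have Ng: "cmp Y Z Z N g = zer C Y Z" unfolding N_def using c m cg by simp
  have "cmp Z Z Z N N = cmp Z Z Z N (cmp Z Y Z g v)" using v by simp
  also have "\<dots> = cmp Z Y Z (cmp Y Z Z N g) v" using N m v by simp
  also have "\<dots> = zer C Z Z" using Ng v by simp
  finally have NN: "cmp Z Z Z N N = zer C Z Z" .
  have cN: "c = ad Z Z (idm C Z) (sc Z Z (-1) N)" unfolding N_def using c by simp
  have 1: "cmp Z Z Z c (ad Z Z (idm C Z) N) = idm C Z"
    unfolding cN using N NN by simp
  have 2: "cmp Z Z Z (ad Z Z (idm C Z) N) c = idm C Z"
    unfolding cN using N NN by simp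
  show ?thesis unfolding is_iso_t using 1 2 c N by (intro conjI bexI[of _ "ad Z Z (idm C Z) N"]) simp_all
qed


lemma pre2: "cmp A B D r s = t \<Longrightarrow> x \<in> Hom C X A \<Longrightarrow> s \<in> Hom C A B \<Longrightarrow> r \<in> Hom C B D \<Longrightarrow>
   cmp X B D r (cmp X A B s x) = cmp X A D t x"
  unfolding cmp_def by (metis assoc)
lemma pre3: "cmp A E D r (cmp A B E s j) = t \<Longrightarrow> x \<in> Hom C X A \<Longrightarrow> j \<in> Hom C A B \<Longrightarrow> s \<in> Hom C B E \<Longrightarrow> r \<in> Hom C E D \<Longrightarrow>
   cmp X E D r (cmp X B E s (cmp X A B j x)) = cmp X A D t x"
proof -
  assume t: "cmp A E D r (cmp A B E s j) = t" and m: "x \<in> Hom C X A" "j \<in> Hom C A B" "s \<in> Hom C B E" "r \<in> Hom C E D"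
  have "cmp X E D r (cmp X B E s (cmp X A B j x)) = cmp X E D r (cmp X A E (cmp A B E s j) x)"
    using m by simp
  also have "\<dots> = cmp X A D (cmp A E D r (cmp A B E s j)) x" using m by simp
  finally show ?thesis using t by simp
qed

lemma is_biprod_t: "is_biprod C X Y S i1 i2 p1 p2 \<longleftrightarrow>
     i1 \<in> Hom C X S \<and> i2 \<in> Hom C Y S \<and> p1 \<in> Hom C S X \<and> p2 \<in> Hom C S Y \<and>
     cmp X S X p1 i1 = idm C X \<and> cmp Y S Y p2 i2 = idm C Y \<and>
     cmp Y S X p1 i2 = zer C Y X \<and> cmp X S Y p2 i1 = zer C X Y \<and>
     ad S S (cmp S X S i1 p1) (cmp S Y S i2 p2) = idm C S"
  unfolding is_biprod_def cmp_def ad_def by blast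

section \<open>Orthogonal classes\<close>

definition orth :: "'o set \<Rightarrow> 'o set" where
  "orth A = {X. \<forall>Y\<in>A. \<not> nz X Y \<and> \<not> nz Y X}"

definition "shstable A \<longleftrightarrow> (\<forall>Y\<in>A. sh C Y \<in> A) \<and> (\<forall>Y\<in>A. \<exists>Y'\<in>A. isomorphic C (sh C Y') Y)"

lemma orth_iso: "X \<in> orth A \<Longrightarrow> isomorphic C X X' \<Longrightarrow> X' \<in> orth A"
proof -
  assume x: "X \<in> orth A" and i: "isomorphic C X X'"
  have i': "isomorphic C X' X" using i by (rule isomorphic_sym)
  show ?thesis unfolding orth_def
  proof (intro CollectI ballI)
    fix Y assume "Y \<in> A"
    then have "\<not> nz X Y \<and> \<not> nz Y X" using x unfolding orth_def by blast
    then show "\<not> nz X' Y \<and> \<not> nz Y X'" using nz_iso[OF _ i' isomorphic_refl] nz_iso[OF _ isomorphic_refl i'] by blast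
  qed
qed

lemma orth_zero: "zero_obj C Z \<Longrightarrow> Z \<in> orth A"
  unfolding orth_def using zero_hom1 zero_hom2 by blast

lemma orth_sh: "shstable A \<Longrightarrow> sh C X \<in> orth A \<longleftrightarrow> X \<in> orth A"
proof
  assume st: "shstable A" and x: "sh C X \<in> orth A"
  show "X \<in> orth A" unfolding orth_def
  proof (intro CollectI ballI)
    fix Y assume "Y \<in> A"
    then have "sh C Y \<in> A" using st unfolding shstable_def by blast
    then have "\<not> nz (sh C X) (sh C Y) \<and> \<not> nz (sh C Y) (sh C X)" using x unfolding orth_def by blast
    then show "\<not> nz X Y \<and> \<not> nz Y X" unfolding nz_sh .
  qed
next
  assume st: "shstable A" and x: "X \<in> orth A"
  show "sh C X \<in> orth A" unfolding orth_def
  proof (intro CollectI ballI)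
    fix Y assume "Y \<in> A"
    then obtain Y' where y: "Y' \<in> A" "isomorphic C (sh C Y') Y" using st unfolding shstable_def by blast
    then have "\<not> nz X Y' \<and> \<not> nz Y' X" using x unfolding orth_def by blast
    then have a: "\<not> nz (sh C X) (sh C Y') \<and> \<not> nz (sh C Y') (sh C X)" unfolding nz_sh .
    have b: "isomorphic C Y (sh C Y')" using y(2) by (rule isomorphic_sym)
    have c: "isomorphic C (sh C X) (sh C X)" by (rule isomorphic_refl)
    show "\<not> nz (sh C X) Y \<and> \<not> nz Y (sh C X)"
      using a nz_iso[OF _ c b] nz_iso[OF _ b c] by blast
  qed
qed

lemma orth_shstable: "shstable A \<Longrightarrow> shstable (orth A)"
proof -
  assume st: "shstable A"
  have 1: "\<forall>Y\<in>orth A. sh C Y \<in> orth A" using orth_sh[OF st] by simp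
  have 2: "\<forall>Y\<in>orth A. \<exists>Y'\<in>orth A. isomorphic C (sh C Y') Y"
  proof
    fix Y assume y: "Y \<in> orth A"
    obtain Y' where i: "isomorphic C (sh C Y') Y" using ess by blast
    then have "sh C Y' \<in> orth A" using orth_iso[OF y] isomorphic_sym by blast
    then have "Y' \<in> orth A" using orth_sh[OF st] by simp
    then show "\<exists>Y'\<in>orth A. isomorphic C (sh C Y') Y" using i by blast
  qed
  show ?thesis unfolding shstable_def using 1 2 by blast
qed

lemma orth_cone:
  assumes st: "shstable A" and T: "(X, Y, Z, f, g, h) \<in> dtri C"
    and x: "X \<in> orth A" and y: "Y \<in> orth A"
  shows "Z \<in> orth A"
  unfolding orth_def
proof (intro CollectI ballI conjI)
  fix W assume w: "W \<in> A"
  have m: "f \<in> Hom C X Y" "g \<in> Hom C Y Z" "h \<in> Hom C Z (sh C X)" using dtri_in[OF T] by auto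
  have sx: "sh C X \<in> orth A" using orth_sh[OF st] x by simp
  have T': "(Y, Z, sh C X, g, h, sc (sh C X) (sh C Y) (-1) (shf X Y f)) \<in> dtri C" using dtri_rot[OF T] .
  show "\<not> nz Z W" unfolding nz_def
  proof
    assume "\<exists>u\<in>Hom C Z W. u \<noteq> zer C Z W"
    then obtain u where u: "u \<in> Hom C Z W" "u \<noteq> zer C Z W" by blast
    have "\<not> nz Y W" using y w unfolding orth_def by blast
    from not_nz[OF this] have "cmp Y Z W u g = zer C Y W" using u m by simp
    then obtain v where v: "v \<in> Hom C (sh C X) W" "u = cmp Z (sh C X) W v h"
      using exact_contra[OF T' u(1)] by blast
    have "v = zer C (sh C X) W" using sx w v not_nz unfolding orth_def by blast
    then show False using u v m by simp
  qed
  show "\<not> nz W Z" unfolding nz_def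
  proof
    assume "\<exists>u\<in>Hom C W Z. u \<noteq> zer C W Z"
    then obtain u where u: "u \<in> Hom C W Z" "u \<noteq> zer C W Z" by blast
    have "\<not> nz W (sh C X)" using sx w unfolding orth_def by blast
    from not_nz[OF this] have "cmp W Z (sh C X) h u = zer C W (sh C X)" using u m by simp
    then obtain v where v: "v \<in> Hom C W Y" "u = cmp W Y Z g v"
      using exact_cov[OF T' u(1)] by blast
    have "v = zer C W Y" using y w v not_nz unfolding orth_def by blast
    then show False using u v m by simp
  qed
qed

lemma orth_retract:
  assumes s: "S \<in> orth A" and i: "i \<in> Hom C X S" and p: "p \<in> Hom C S X" and e: "cmp X S X p i = idm C X"
  shows "X \<in> orth A"
  unfolding orth_def
proof (intro CollectI ballI conjI)
  fix W assume w: "W \<in> A"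
  show "\<not> nz X W" unfolding nz_def
  proof (intro notI, elim bexE)
    fix u assume u: "u \<in> Hom C X W" "u \<noteq> zer C X W"
    have "\<not> nz S W" using s w unfolding orth_def by blast
    from not_nz[OF this] have "cmp S X W u p = zer C S W" using u p by simp
    then have "cmp X S W (cmp S X W u p) i = zer C X W" using i by simp
    then show False using u i p e by simp
  qed
  show "\<not> nz W X" unfolding nz_def
  proof (intro notI, elim bexE)
    fix u assume u: "u \<in> Hom C W X" "u \<noteq> zer C W X"
    have "\<not> nz W S" using s w unfolding orth_def by blast
    from not_nz[OF this] have "cmp W X S i u = zer C W S" using u i by simp
    then have "cmp W S X p (cmp W X S i u) = zer C W X" using p by simp
    then show False using u i p e by (simp add: pre2[OF e])
  qed
qed

lemma orth_biprod:
  assumes b: "biprod C X Y S" and x: "X \<in> orth A" and y: "Y \<in> orth A"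
  shows "S \<in> orth A"
  unfolding orth_def
proof (intro CollectI ballI conjI)
  fix W assume w: "W \<in> A"
  obtain i1 i2 p1 p2 where bp: "is_biprod C X Y S i1 i2 p1 p2" using b unfolding biprod_def by blast
  note bb = bp[unfolded is_biprod_t]
  have m: "i1 \<in> Hom C X S" "i2 \<in> Hom C Y S" "p1 \<in> Hom C S X" "p2 \<in> Hom C S Y" using bb by auto
  show "\<not> nz S W" unfolding nz_def
  proof (intro notI, elim bexE)
    fix u assume u: "u \<in> Hom C S W" "u \<noteq> zer C S W"
    have "\<not> nz X W" "\<not> nz Y W" using x y w unfolding orth_def by blast+
    from not_nz[OF this(1)] not_nz[OF this(2)]
    have z1: "cmp X S W u i1 = zer C X W" and z2: "cmp Y S W u i2 = zer C Y W" using u bb by simp_all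
    have "u = cmp S S W u (ad S S (cmp S X S i1 p1) (cmp S Y S i2 p2))" using bb u by simp
    also have "\<dots> = zer C S W" using m u by (simp add: pre2[OF z1] pre2[OF z2])
    finally show False using u by simp
  qed
  show "\<not> nz W S" unfolding nz_def
  proof (intro notI, elim bexE)
    fix u assume u: "u \<in> Hom C W S" "u \<noteq> zer C W S"
    have "\<not> nz W X" "\<not> nz W Y" using x y w unfolding orth_def by blast+
    from not_nz[OF this(1)] not_nz[OF this(2)]
    have z1: "cmp W S X p1 u = zer C W X" and z2: "cmp W S Y p2 u = zer C W Y" using u bb by simp_all
    have "u = cmp W S S (ad S S (cmp S X S i1 p1) (cmp S Y S i2 p2)) u" using bb u by simp
    also have "\<dots> = zer C W S" using m u z1 z2 by simp
    finally show False using u by simp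
  qed
qed


lemma biprod_t: "biprod C X Y S \<longleftrightarrow> (\<exists>i1 i2 p1 p2. i1 \<in> Hom C X S \<and> i2 \<in> Hom C Y S \<and> p1 \<in> Hom C S X \<and> p2 \<in> Hom C S Y \<and>
     cmp X S X p1 i1 = idm C X \<and> cmp Y S Y p2 i2 = idm C Y \<and>
     cmp Y S X p1 i2 = zer C Y X \<and> cmp X S Y p2 i1 = zer C X Y \<and>
     ad S S (cmp S X S i1 p1) (cmp S Y S i2 p2) = idm C S)"
  unfolding biprod_def is_biprod_t by blast

lemma biprod_sym: "biprod C X Y S \<Longrightarrow> biprod C Y X S"
  unfolding biprod_t by (metis ad_comm cmp_in)

lemma biprod_zero_r: "zero_obj C Z \<Longrightarrow> biprod C X Z X"
proof -
  assume z: "zero_obj C Z"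
  have "Hom C Z Z = {zer C Z Z}" using z unfolding zero_obj_def by blast
  then have zz: "idm C Z = zer C Z Z" using id_in by blast
  show ?thesis unfolding biprod_t
    by (rule exI[of _ "idm C X"], rule exI[of _ "zer C Z X"], rule exI[of _ "idm C X"], rule exI[of _ "zer C X Z"])
       (simp add: zz)
qed

lemma biprod_zero_iso: "biprod C X Y S \<Longrightarrow> zero_obj C Y \<Longrightarrow> isomorphic C X S"
proof -
  assume "biprod C X Y S" and z: "zero_obj C Y"
  then obtain i1 i2 p1 p2 where b: "i1 \<in> Hom C X S" "i2 \<in> Hom C Y S" "p1 \<in> Hom C S X" "p2 \<in> Hom C S Y"
     "cmp X S X p1 i1 = idm C X" "ad S S (cmp S X S i1 p1) (cmp S Y S i2 p2) = idm C S"
    unfolding biprod_t by blast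
  have "i2 = zer C Y S" using z b(2) unfolding zero_obj_def by blast
  then have "cmp S X S i1 p1 = idm C S" using b by simp
  then show ?thesis unfolding isomorphic_def is_iso_t using b by blast
qed

lemma biprod_iso_X: "biprod C X Y S \<Longrightarrow> isomorphic C X X' \<Longrightarrow> biprod C X' Y S"
proof -
  assume "biprod C X Y S" "isomorphic C X X'"
  then obtain i1 i2 p1 p2 ph ps where b: "i1 \<in> Hom C X S" "i2 \<in> Hom C Y S" "p1 \<in> Hom C S X" "p2 \<in> Hom C S Y"
     "cmp X S X p1 i1 = idm C X" "cmp Y S Y p2 i2 = idm C Y"
     "cmp Y S X p1 i2 = zer C Y X" "cmp X S Y p2 i1 = zer C X Y"
     "ad S S (cmp S X S i1 p1) (cmp S Y S i2 p2) = idm C S"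
    and p: "ph \<in> Hom C X X'" "ps \<in> Hom C X' X" "cmp X X' X ps ph = idm C X" "cmp X' X X' ph ps = idm C X'"
    unfolding biprod_t isomorphic_def is_iso_t by blast
  show ?thesis unfolding biprod_t
    apply (rule exI[of _ "cmp X' X S i1 ps"], rule exI[of _ i2], rule exI[of _ "cmp S X X' ph p1"], rule exI[of _ p2])
    using b p by (simp add: pre2[OF b(5)] pre2[OF b(8)] pre2[OF p(3)])
qed

lemma biprod_iso_S: "biprod C X Y S \<Longrightarrow> isomorphic C S S' \<Longrightarrow> biprod C X Y S'"
proof -
  assume "biprod C X Y S" "isomorphic C S S'"
  then obtain i1 i2 p1 p2 ph ps where b: "i1 \<in> Hom C X S" "i2 \<in> Hom C Y S" "p1 \<in> Hom C S X" "p2 \<in> Hom C S Y"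
     "cmp X S X p1 i1 = idm C X" "cmp Y S Y p2 i2 = idm C Y"
     "cmp Y S X p1 i2 = zer C Y X" "cmp X S Y p2 i1 = zer C X Y"
     and s: "ad S S (cmp S X S i1 p1) (cmp S Y S i2 p2) = idm C S"
    and p: "ph \<in> Hom C S S'" "ps \<in> Hom C S' S" "cmp S S' S ps ph = idm C S" "cmp S' S S' ph ps = idm C S'"
    unfolding biprod_t isomorphic_def is_iso_t by blast
  have e: "ad S' S' (cmp S' X S' (cmp X S S' ph i1) (cmp S' S X p1 ps)) (cmp S' Y S' (cmp Y S S' ph i2) (cmp S' S Y p2 ps))
     = cmp S' S S' ph (cmp S' S S (ad S S (cmp S X S i1 p1) (cmp S Y S i2 p2)) ps)" using b p by simp
  show ?thesis unfolding biprod_t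
    apply (rule exI[of _ "cmp X S S' ph i1"], rule exI[of _ "cmp Y S S' ph i2"], rule exI[of _ "cmp S' S X p1 ps"], rule exI[of _ "cmp S' S Y p2 ps"])
    using b p e s by (simp add: pre2[OF p(3)])
qed

lemma biprod_sh: "biprod C X Y S \<Longrightarrow> biprod C (sh C X) (sh C Y) (sh C S)"
proof -
  assume "biprod C X Y S"
  then obtain i1 i2 p1 p2 where b: "i1 \<in> Hom C X S" "i2 \<in> Hom C Y S" "p1 \<in> Hom C S X" "p2 \<in> Hom C S Y"
     "cmp X S X p1 i1 = idm C X" "cmp Y S Y p2 i2 = idm C Y"
     "cmp Y S X p1 i2 = zer C Y X" "cmp X S Y p2 i1 = zer C X Y"
     "ad S S (cmp S X S i1 p1) (cmp S Y S i2 p2) = idm C S"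
    unfolding biprod_t by blast
  have e: "ad (sh C S) (sh C S) (cmp (sh C S) (sh C X) (sh C S) (shf X S i1) (shf S X p1)) (cmp (sh C S) (sh C Y) (sh C S) (shf Y S i2) (shf S Y p2))
       = shf S S (ad S S (cmp S X S i1 p1) (cmp S Y S i2 p2))" using b(1-4) by simp
  have e5: "ad (sh C S) (sh C S) (cmp (sh C S) (sh C X) (sh C S) (shf X S i1) (shf S X p1)) (cmp (sh C S) (sh C Y) (sh C S) (shf Y S i2) (shf S Y p2))
       = idm C (sh C S)" unfolding e b(9) by simp
  have e1: "cmp (sh C X) (sh C S) (sh C X) (shf S X p1) (shf X S i1) = idm C (sh C X)"
    using b by (simp flip: shf_cmp)
  have e2: "cmp (sh C Y) (sh C S) (sh C Y) (shf S Y p2) (shf Y S i2) = idm C (sh C Y)"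
    using b by (simp flip: shf_cmp)
  have e3: "cmp (sh C Y) (sh C S) (sh C X) (shf S X p1) (shf Y S i2) = zer C (sh C Y) (sh C X)"
    using b by (simp flip: shf_cmp)
  have e4: "cmp (sh C X) (sh C S) (sh C Y) (shf S Y p2) (shf X S i1) = zer C (sh C X) (sh C Y)"
    using b by (simp flip: shf_cmp)
  show ?thesis unfolding biprod_t
    apply (rule exI[of _ "shf X S i1"], rule exI[of _ "shf Y S i2"], rule exI[of _ "shf S X p1"], rule exI[of _ "shf S Y p2"])
    using b e1 e2 e3 e4 e5 by simp
qed

lemma biprod_unsh: "biprod C (sh C X) (sh C Y) (sh C S) \<Longrightarrow> biprod C X Y S"
proof -
  assume "biprod C (sh C X) (sh C Y) (sh C S)"
  then obtain j1 j2 q1 q2 where b: "j1 \<in> Hom C (sh C X) (sh C S)" "j2 \<in> Hom C (sh C Y) (sh C S)" "q1 \<in> Hom C (sh C S) (sh C X)" "q2 \<in> Hom C (sh C S) (sh C Y)"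
     "cmp (sh C X) (sh C S) (sh C X) q1 j1 = idm C (sh C X)" "cmp (sh C Y) (sh C S) (sh C Y) q2 j2 = idm C (sh C Y)"
     "cmp (sh C Y) (sh C S) (sh C X) q1 j2 = zer C (sh C Y) (sh C X)" "cmp (sh C X) (sh C S) (sh C Y) q2 j1 = zer C (sh C X) (sh C Y)"
     "ad (sh C S) (sh C S) (cmp (sh C S) (sh C X) (sh C S) j1 q1) (cmp (sh C S) (sh C Y) (sh C S) j2 q2) = idm C (sh C S)"
    unfolding biprod_t by blast
  obtain i1 where i1: "i1 \<in> Hom C X S" "j1 = shf X S i1" using shf_surj b(1) by blast
  obtain i2 where i2: "i2 \<in> Hom C Y S" "j2 = shf Y S i2" using shf_surj b(2) by blast
  obtain p1 where p1: "p1 \<in> Hom C S X" "q1 = shf S X p1" using shf_surj b(3) by blast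
  obtain p2 where p2: "p2 \<in> Hom C S Y" "q2 = shf S Y p2" using shf_surj b(4) by blast
  have 1: "cmp X S X p1 i1 = idm C X"
    using b(5) i1 p1 shf_inj[of "cmp X S X p1 i1" X X "idm C X"] by simp
  have 2: "cmp Y S Y p2 i2 = idm C Y"
    using b(6) i2 p2 shf_inj[of "cmp Y S Y p2 i2" Y Y "idm C Y"] by simp
  have 3: "cmp Y S X p1 i2 = zer C Y X"
    using b(7) i2 p1 shf_inj[of "cmp Y S X p1 i2" Y X "zer C Y X"] by simp
  have 4: "cmp X S Y p2 i1 = zer C X Y"
    using b(8) i1 p2 shf_inj[of "cmp X S Y p2 i1" X Y "zer C X Y"] by simp
  have 5: "ad S S (cmp S X S i1 p1) (cmp S Y S i2 p2) = idm C S"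
    using b(9) i1 i2 p1 p2 shf_inj[of "ad S S (cmp S X S i1 p1) (cmp S Y S i2 p2)" S S "idm C S"] by simp
  show ?thesis unfolding biprod_t using 1 2 3 4 5 i1 i2 p1 p2 by blast
qed

lemma summand_trans:
  assumes b1: "biprod C W W' S'" and b2: "biprod C S' X S"
  shows "\<exists>W''. biprod C W W'' S"
proof -
  obtain i i' p p' where a: "i \<in> Hom C W S'" "i' \<in> Hom C W' S'" "p \<in> Hom C S' W" "p' \<in> Hom C S' W'"
     "cmp W S' W p i = idm C W" "cmp W' S' W' p' i' = idm C W'"
     "cmp W' S' W p i' = zer C W' W" "cmp W S' W' p' i = zer C W W'"
     "ad S' S' (cmp S' W S' i p) (cmp S' W' S' i' p') = idm C S'"
    using b1 unfolding biprod_t by blast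
  obtain j jx r rx where c: "j \<in> Hom C S' S" "jx \<in> Hom C X S" "r \<in> Hom C S S'" "rx \<in> Hom C S X"
     "cmp S' S S' r j = idm C S'" "cmp X S X rx jx = idm C X"
     "cmp X S S' r jx = zer C X S'" "cmp S' S X rx j = zer C S' X"
     "ad S S (cmp S S' S j r) (cmp S X S jx rx) = idm C S"
    using b2 unfolding biprod_t by blast
  obtain W'' where "biprod C W' X W''" using K_biprodex by blast
  then obtain m1 m2 n1 n2 where d: "m1 \<in> Hom C W' W''" "m2 \<in> Hom C X W''" "n1 \<in> Hom C W'' W'" "n2 \<in> Hom C W'' X"
     "cmp W' W'' W' n1 m1 = idm C W'" "cmp X W'' X n2 m2 = idm C X"
     "cmp X W'' W' n1 m2 = zer C X W'" "cmp W' W'' X n2 m1 = zer C W' X"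
     "ad W'' W'' (cmp W'' W' W'' m1 n1) (cmp W'' X W'' m2 n2) = idm C W''"
    unfolding biprod_t by blast
  let ?I1 = "cmp W S' S j i" and ?P1 = "cmp S S' W p r"
  let ?I2 = "ad W'' S (cmp W'' S' S j (cmp W'' W' S' i' n1)) (cmp W'' X S jx n2)"
  let ?P2 = "ad S W'' (cmp S W' W'' m1 (cmp S S' W' p' r)) (cmp S X W'' m2 rx)"
  note simps = pre2[OF a(5)] pre2[OF a(6)] pre2[OF a(7)] pre2[OF a(8)] pre2[OF c(5)] pre2[OF c(6)]
     pre2[OF c(7)] pre2[OF c(8)] pre2[OF d(5)] pre2[OF d(6)] pre2[OF d(7)] pre2[OF d(8)]
  have e1: "cmp W S W ?P1 ?I1 = idm C W" using a c d by (simp add: simps)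
  have e2: "cmp W'' S W'' ?P2 ?I2 = idm C W''" using a c d by (simp add: simps flip: d(9))
  have e3: "cmp W'' S W ?P1 ?I2 = zer C W'' W" using a c d by (simp add: simps)
  have e4: "cmp W S W'' ?P2 ?I1 = zer C W W''" using a c d by (simp add: simps)
  have e5: "ad S S (cmp S W S ?I1 ?P1) (cmp S W'' S ?I2 ?P2) = idm C S"
  proof -
    have "ad S S (cmp S W S ?I1 ?P1) (cmp S W'' S ?I2 ?P2) =
       ad S S (cmp S S' S j (cmp S S' S' (ad S' S' (cmp S' W S' i p) (cmp S' W' S' i' p')) r)) (cmp S X S jx rx)"
      using a(1-8) c(1-8) d(1-8) by (simp add: simps ad_lcomm)
    also have "\<dots> = idm C S" unfolding a(9) using a c by simp
    finally show ?thesis .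
  qed
  have "biprod C W W'' S" unfolding biprod_t
    apply (rule exI[of _ ?I1], rule exI[of _ ?I2], rule exI[of _ ?P1], rule exI[of _ ?P2])
    using a c d e1 e2 e3 e4 e5 by simp
  then show ?thesis by blast
qed


section \<open>The decomposable class\<close>

definition Vc :: "'o set \<Rightarrow> 'o set \<Rightarrow> 'o set" where
  "Vc A B = {X. \<exists>Z1 Z2 a1 b1 a2 b2. Z1 \<in> A \<and> Z2 \<in> B \<and> b1 \<in> Hom C X Z1 \<and> a1 \<in> Hom C Z1 X \<and>
     b2 \<in> Hom C X Z2 \<and> a2 \<in> Hom C Z2 X \<and> ad X X (cmp X Z1 X a1 b1) (cmp X Z2 X a2 b2) = idm C X}"

definition goodcl :: "'o set \<Rightarrow> bool" where
  "goodcl A \<longleftrightarrow> (\<forall>X X'. X \<in> A \<longrightarrow> isomorphic C X X' \<longrightarrow> X' \<in> A) \<and> (\<forall>X. sh C X \<in> A \<longleftrightarrow> X \<in> A) \<and>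
     (\<forall>X Y Z f g h. (X, Y, Z, f, g, h) \<in> dtri C \<longrightarrow> X \<in> A \<longrightarrow> Y \<in> A \<longrightarrow> Z \<in> A) \<and>
     (\<forall>Z. zero_obj C Z \<longrightarrow> Z \<in> A)"

lemma orth_goodcl: "shstable Q \<Longrightarrow> goodcl (orth Q)"
  unfolding goodcl_def using orth_iso orth_sh orth_cone orth_zero by blast

context
  fixes A B
  assumes gA: "goodcl A" and gB: "goodcl B" and oAB: "\<forall>a\<in>A. \<forall>b\<in>B. \<not> nz a b \<and> \<not> nz b a"
begin

lemma A_iso: "X \<in> A \<Longrightarrow> isomorphic C X X' \<Longrightarrow> X' \<in> A" using gA unfolding goodcl_def by blast
lemma B_iso: "X \<in> B \<Longrightarrow> isomorphic C X X' \<Longrightarrow> X' \<in> B" using gB unfolding goodcl_def by blast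
lemma A_sh: "sh C X \<in> A \<longleftrightarrow> X \<in> A" using gA unfolding goodcl_def by blast
lemma B_sh: "sh C X \<in> B \<longleftrightarrow> X \<in> B" using gB unfolding goodcl_def by blast
lemma A_cone: "(X, Y, Z, f, g, h) \<in> dtri C \<Longrightarrow> X \<in> A \<Longrightarrow> Y \<in> A \<Longrightarrow> Z \<in> A" using gA unfolding goodcl_def by blast
lemma B_cone: "(X, Y, Z, f, g, h) \<in> dtri C \<Longrightarrow> X \<in> B \<Longrightarrow> Y \<in> B \<Longrightarrow> Z \<in> B" using gB unfolding goodcl_def by blast
lemma A_zero: "zero_obj C Z \<Longrightarrow> Z \<in> A" using gA unfolding goodcl_def by blast
lemma B_zero: "zero_obj C Z \<Longrightarrow> Z \<in> B" using gB unfolding goodcl_def by blast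

lemma Vc_zero: "zero_obj C Z \<Longrightarrow> Z \<in> Vc A B"
proof -
  assume z: "zero_obj C Z"
  have "ad Z Z (cmp Z Z Z (zer C Z Z) (zer C Z Z)) (cmp Z Z Z (zer C Z Z) (zer C Z Z)) = idm C Z"
    using z unfolding zero_obj_iff by simp
  then show ?thesis unfolding Vc_def using A_zero[OF z] B_zero[OF z] zer_in by blast
qed

lemma Vc_iso: "X \<in> Vc A B \<Longrightarrow> isomorphic C X X' \<Longrightarrow> X' \<in> Vc A B"
proof -
  assume "X \<in> Vc A B" "isomorphic C X X'"
  then obtain Z1 Z2 a1 b1 a2 b2 ph ps where m: "Z1 \<in> A" "Z2 \<in> B" "b1 \<in> Hom C X Z1" "a1 \<in> Hom C Z1 X"
     "b2 \<in> Hom C X Z2" "a2 \<in> Hom C Z2 X" and s: "ad X X (cmp X Z1 X a1 b1) (cmp X Z2 X a2 b2) = idm C X"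
     and p: "ph \<in> Hom C X X'" "ps \<in> Hom C X' X" "cmp X' X X' ph ps = idm C X'"
    unfolding Vc_def isomorphic_def is_iso_t by blast
  have "ad X' X' (cmp X' Z1 X' (cmp Z1 X X' ph a1) (cmp X' X Z1 b1 ps)) (cmp X' Z2 X' (cmp Z2 X X' ph a2) (cmp X' X Z2 b2 ps))
     = cmp X' X X' ph (cmp X' X X (ad X X (cmp X Z1 X a1 b1) (cmp X Z2 X a2 b2)) ps)" using m p by simp
  also have "\<dots> = idm C X'" using s p by simp
  finally have e: "ad X' X' (cmp X' Z1 X' (cmp Z1 X X' ph a1) (cmp X' X Z1 b1 ps)) (cmp X' Z2 X' (cmp Z2 X X' ph a2) (cmp X' X Z2 b2 ps)) = idm C X'" .
  show ?thesis unfolding Vc_def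
    apply (rule CollectI)
    apply (rule exI[of _ Z1], rule exI[of _ Z2], rule exI[of _ "cmp Z1 X X' ph a1"], rule exI[of _ "cmp X' X Z1 b1 ps"],
           rule exI[of _ "cmp Z2 X X' ph a2"], rule exI[of _ "cmp X' X Z2 b2 ps"])
    using m p e by simp
qed

lemma Vc_sh1: "X \<in> Vc A B \<Longrightarrow> sh C X \<in> Vc A B"
proof -
  assume "X \<in> Vc A B"
  then obtain Z1 Z2 a1 b1 a2 b2 where m: "Z1 \<in> A" "Z2 \<in> B" "b1 \<in> Hom C X Z1" "a1 \<in> Hom C Z1 X"
     "b2 \<in> Hom C X Z2" "a2 \<in> Hom C Z2 X" and s: "ad X X (cmp X Z1 X a1 b1) (cmp X Z2 X a2 b2) = idm C X"
    unfolding Vc_def by blast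
  have "ad (sh C X) (sh C X) (cmp (sh C X) (sh C Z1) (sh C X) (shf Z1 X a1) (shf X Z1 b1))
           (cmp (sh C X) (sh C Z2) (sh C X) (shf Z2 X a2) (shf X Z2 b2))
     = shf X X (ad X X (cmp X Z1 X a1 b1) (cmp X Z2 X a2 b2))" using m by simp
  also have "\<dots> = idm C (sh C X)" using s by simp
  finally have e: "ad (sh C X) (sh C X) (cmp (sh C X) (sh C Z1) (sh C X) (shf Z1 X a1) (shf X Z1 b1))
           (cmp (sh C X) (sh C Z2) (sh C X) (shf Z2 X a2) (shf X Z2 b2)) = idm C (sh C X)" .
  have sz: "sh C Z1 \<in> A" "sh C Z2 \<in> B" using m A_sh B_sh by auto
  show ?thesis unfolding Vc_def
    apply (rule CollectI, rule exI[of _ "sh C Z1"], rule exI[of _ "sh C Z2"], rule exI[of _ "shf Z1 X a1"], rule exI[of _ "shf X Z1 b1"],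
         rule exI[of _ "shf Z2 X a2"], rule exI[of _ "shf X Z2 b2"])
    using m e sz by simp
qed

lemma Vc_sh2: "sh C X \<in> Vc A B \<Longrightarrow> X \<in> Vc A B"
proof -
  assume "sh C X \<in> Vc A B"
  then obtain Z1 Z2 a1 b1 a2 b2 where m: "Z1 \<in> A" "Z2 \<in> B" "b1 \<in> Hom C (sh C X) Z1" "a1 \<in> Hom C Z1 (sh C X)"
     "b2 \<in> Hom C (sh C X) Z2" "a2 \<in> Hom C Z2 (sh C X)"
     and s: "ad (sh C X) (sh C X) (cmp (sh C X) Z1 (sh C X) a1 b1) (cmp (sh C X) Z2 (sh C X) a2 b2) = idm C (sh C X)"
    unfolding Vc_def by blast
  obtain U1 where "isomorphic C (sh C U1) Z1" using ess by blast
  then obtain ph1 ps1 where p1: "ph1 \<in> Hom C (sh C U1) Z1" "ps1 \<in> Hom C Z1 (sh C U1)" "cmp Z1 (sh C U1) Z1 ph1 ps1 = idm C Z1"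
    and i1: "isomorphic C (sh C U1) Z1"
    unfolding isomorphic_def is_iso_t by blast
  obtain U2 where "isomorphic C (sh C U2) Z2" using ess by blast
  then obtain ph2 ps2 where p2: "ph2 \<in> Hom C (sh C U2) Z2" "ps2 \<in> Hom C Z2 (sh C U2)" "cmp Z2 (sh C U2) Z2 ph2 ps2 = idm C Z2"
    and i2: "isomorphic C (sh C U2) Z2"
    unfolding isomorphic_def is_iso_t by blast
  have u1: "U1 \<in> A" using A_iso[OF m(1) isomorphic_sym[OF i1]] A_sh by blast
  have u2: "U2 \<in> B" using B_iso[OF m(2) isomorphic_sym[OF i2]] B_sh by blast
  obtain be1 where be1: "be1 \<in> Hom C X U1" "cmp (sh C X) Z1 (sh C U1) ps1 b1 = shf X U1 be1"
    using shf_surj[of "cmp (sh C X) Z1 (sh C U1) ps1 b1" X U1] m p1 by auto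
  obtain al1 where al1: "al1 \<in> Hom C U1 X" "cmp (sh C U1) Z1 (sh C X) a1 ph1 = shf U1 X al1"
    using shf_surj[of "cmp (sh C U1) Z1 (sh C X) a1 ph1" U1 X] m p1 by auto
  obtain be2 where be2: "be2 \<in> Hom C X U2" "cmp (sh C X) Z2 (sh C U2) ps2 b2 = shf X U2 be2"
    using shf_surj[of "cmp (sh C X) Z2 (sh C U2) ps2 b2" X U2] m p2 by auto
  obtain al2 where al2: "al2 \<in> Hom C U2 X" "cmp (sh C U2) Z2 (sh C X) a2 ph2 = shf U2 X al2"
    using shf_surj[of "cmp (sh C U2) Z2 (sh C X) a2 ph2" U2 X] m p2 by auto
  have "shf X X (ad X X (cmp X U1 X al1 be1) (cmp X U2 X al2 be2)) = idm C (sh C X)"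
    using m p1 p2 be1 al1 be2 al2 s by (simp flip: be1(2) al1(2) be2(2) al2(2) add: pre2[OF p1(3)] pre2[OF p2(3)])
  then have "shf X X (ad X X (cmp X U1 X al1 be1) (cmp X U2 X al2 be2)) = shf X X (idm C X)" by simp
  then have e: "ad X X (cmp X U1 X al1 be1) (cmp X U2 X al2 be2) = idm C X"
    using shf_inj be1 al1 be2 al2 by (meson ad_in cmp_in id_in)
  show ?thesis unfolding Vc_def using u1 u2 be1 al1 be2 al2 e by blast
qed

lemma Vc_summand: "biprod C X Y S \<Longrightarrow> S \<in> Vc A B \<Longrightarrow> X \<in> Vc A B"
proof -
  assume b: "biprod C X Y S" and "S \<in> Vc A B"
  then obtain Z1 Z2 a1 b1 a2 b2 where m: "Z1 \<in> A" "Z2 \<in> B" "b1 \<in> Hom C S Z1" "a1 \<in> Hom C Z1 S"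
     "b2 \<in> Hom C S Z2" "a2 \<in> Hom C Z2 S" and s: "ad S S (cmp S Z1 S a1 b1) (cmp S Z2 S a2 b2) = idm C S"
    unfolding Vc_def by blast
  obtain i1 i2 p1 p2 where "is_biprod C X Y S i1 i2 p1 p2" using b unfolding biprod_def by blast
  then have bb: "i1 \<in> Hom C X S" "p1 \<in> Hom C S X" "cmp X S X p1 i1 = idm C X" unfolding is_biprod_t by auto
  have "ad X X (cmp X Z1 X (cmp Z1 S X p1 a1) (cmp X S Z1 b1 i1)) (cmp X Z2 X (cmp Z2 S X p1 a2) (cmp X S Z2 b2 i1))
     = cmp X S X p1 (cmp X S S (ad S S (cmp S Z1 S a1 b1) (cmp S Z2 S a2 b2)) i1)" using m bb by simp
  also have "\<dots> = idm C X" using s bb by simp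
  finally have e: "ad X X (cmp X Z1 X (cmp Z1 S X p1 a1) (cmp X S Z1 b1 i1)) (cmp X Z2 X (cmp Z2 S X p1 a2) (cmp X S Z2 b2 i1)) = idm C X" .
  show ?thesis unfolding Vc_def
    apply (rule CollectI, rule exI[of _ Z1], rule exI[of _ Z2], rule exI[of _ "cmp Z1 S X p1 a1"], rule exI[of _ "cmp X S Z1 b1 i1"],
         rule exI[of _ "cmp Z2 S X p1 a2"], rule exI[of _ "cmp X S Z2 b2 i1"])
    using m bb e by simp
qed


lemma Vc_cone:
  assumes T: "(X, Y, Z, f, g, h) \<in> dtri C" and x: "X \<in> Vc A B" and y: "Y \<in> Vc A B"
  shows "Z \<in> Vc A B"
proof -
  obtain X1 X2 ax1 bx1 ax2 bx2 where mx: "X1 \<in> A" "X2 \<in> B" "bx1 \<in> Hom C X X1" "ax1 \<in> Hom C X1 X"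
     "bx2 \<in> Hom C X X2" "ax2 \<in> Hom C X2 X" and sx: "ad X X (cmp X X1 X ax1 bx1) (cmp X X2 X ax2 bx2) = idm C X"
    using x unfolding Vc_def by blast
  obtain Y1 Y2 ay1 by1 ay2 by2 where my: "Y1 \<in> A" "Y2 \<in> B" "by1 \<in> Hom C Y Y1" "ay1 \<in> Hom C Y1 Y"
     "by2 \<in> Hom C Y Y2" "ay2 \<in> Hom C Y2 Y" and sy: "ad Y Y (cmp Y Y1 Y ay1 by1) (cmp Y Y2 Y ay2 by2) = idm C Y"
    using y unfolding Vc_def by blast
  have m: "f \<in> Hom C X Y" "g \<in> Hom C Y Z" "h \<in> Hom C Z (sh C X)" using dtri_in[OF T] by auto
  define f1 where "f1 = cmp X1 Y Y1 by1 (cmp X1 X Y f ax1)"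
  define f2 where "f2 = cmp X2 Y Y2 by2 (cmp X2 X Y f ax2)"
  have f1: "f1 \<in> Hom C X1 Y1" unfolding f1_def using m mx my by simp
  have f2: "f2 \<in> Hom C X2 Y2" unfolding f2_def using m mx my by simp
  obtain C1 g1 h1 where T1: "(X1, Y1, C1, f1, g1, h1) \<in> dtri C" using dtri_ex[OF f1] by blast
  obtain C2 g2 h2 where T2: "(X2, Y2, C2, f2, g2, h2) \<in> dtri C" using dtri_ex[OF f2] by blast
  have m1: "g1 \<in> Hom C Y1 C1" "h1 \<in> Hom C C1 (sh C X1)" using dtri_in[OF T1] by auto
  have m2: "g2 \<in> Hom C Y2 C2" "h2 \<in> Hom C C2 (sh C X2)" using dtri_in[OF T2] by auto
  have c1A: "C1 \<in> A" using A_cone[OF T1 mx(1) my(1)] .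
  have c2B: "C2 \<in> B" using B_cone[OF T2 mx(2) my(2)] .
  have "\<not> nz X2 Y1" using oAB mx(2) my(1) by blast
  from not_nz[OF this] have z12: "cmp X2 Y Y1 by1 (cmp X2 X Y f ax2) = zer C X2 Y1" using m mx my by simp
  have "\<not> nz X1 Y2" using oAB mx(1) my(2) by blast
  from not_nz[OF this] have z21: "cmp X1 Y Y2 by2 (cmp X1 X Y f ax1) = zer C X1 Y2" using m mx my by simp
  have e1: "cmp X Y Y1 by1 f = cmp X X1 Y1 f1 bx1"
  proof -
    have "cmp X Y Y1 by1 f = cmp X Y Y1 by1 (cmp X X Y f (ad X X (cmp X X1 X ax1 bx1) (cmp X X2 X ax2 bx2)))"
      using sx m my by simp
    also have "\<dots> = cmp X X1 Y1 f1 bx1" unfolding f1_def using m mx my by (simp add: pre3[OF z12])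
    finally show ?thesis .
  qed
  obtain c1 where c1: "c1 \<in> Hom C Z C1" and c1g: "cmp Y Z C1 c1 g = cmp Y Y1 C1 g1 by1"
    and c1h: "cmp Z (sh C X) (sh C X1) (shf X X1 bx1) h = cmp Z C1 (sh C X1) h1 c1"
    using dtri_mor[OF T T1 mx(3) my(3) e1] by blast
  have e2: "cmp X Y Y2 by2 f = cmp X X2 Y2 f2 bx2"
  proof -
    have "cmp X Y Y2 by2 f = cmp X Y Y2 by2 (cmp X X Y f (ad X X (cmp X X1 X ax1 bx1) (cmp X X2 X ax2 bx2)))"
      using sx m my by simp
    also have "\<dots> = cmp X X2 Y2 f2 bx2" unfolding f2_def using m mx my by (simp add: pre3[OF z21])
    finally show ?thesis .
  qed
  obtain c2 where c2: "c2 \<in> Hom C Z C2" and c2g: "cmp Y Z C2 c2 g = cmp Y Y2 C2 g2 by2"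
    and c2h: "cmp Z (sh C X) (sh C X2) (shf X X2 bx2) h = cmp Z C2 (sh C X2) h2 c2"
    using dtri_mor[OF T T2 mx(5) my(5) e2] by blast
  have e3: "cmp X1 Y1 Y ay1 f1 = cmp X1 X Y f ax1"
  proof -
    have "cmp X1 X Y f ax1 = cmp X1 Y Y (ad Y Y (cmp Y Y1 Y ay1 by1) (cmp Y Y2 Y ay2 by2)) (cmp X1 X Y f ax1)"
      using sy m mx by simp
    also have "\<dots> = cmp X1 Y1 Y ay1 f1" unfolding f1_def using m mx my z21 by simp
    finally show ?thesis by simp
  qed
  obtain d1 where d1: "d1 \<in> Hom C C1 Z" and d1g: "cmp Y1 C1 Z d1 g1 = cmp Y1 Y Z g ay1"
    and d1h: "cmp C1 (sh C X1) (sh C X) (shf X1 X ax1) h1 = cmp C1 Z (sh C X) h d1"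
    using dtri_mor[OF T1 T mx(4) my(4) e3] by blast
  have e4: "cmp X2 Y2 Y ay2 f2 = cmp X2 X Y f ax2"
  proof -
    have "cmp X2 X Y f ax2 = cmp X2 Y Y (ad Y Y (cmp Y Y1 Y ay1 by1) (cmp Y Y2 Y ay2 by2)) (cmp X2 X Y f ax2)"
      using sy m mx by simp
    also have "\<dots> = cmp X2 Y2 Y ay2 f2" unfolding f2_def using m mx my z12 by simp
    finally show ?thesis by simp
  qed
  obtain d2 where d2: "d2 \<in> Hom C C2 Z" and d2g: "cmp Y2 C2 Z d2 g2 = cmp Y2 Y Z g ay2"
    and d2h: "cmp C2 (sh C X2) (sh C X) (shf X2 X ax2) h2 = cmp C2 Z (sh C X) h d2"
    using dtri_mor[OF T2 T mx(6) my(6) e4] by blast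
  define u where "u = ad Z Z (cmp Z C1 Z d1 c1) (cmp Z C2 Z d2 c2)"
  have u: "u \<in> Hom C Z Z" unfolding u_def using c1 c2 d1 d2 by simp
  have ug: "cmp Y Z Z u g = g"
  proof -
    have "cmp Y Z Z u g = cmp Y Y Z g (ad Y Y (cmp Y Y1 Y ay1 by1) (cmp Y Y2 Y ay2 by2))"
      unfolding u_def using m mx my m1 m2 c1 c2 d1 d2
      by (simp add: c1g c2g pre2[OF d1g] pre2[OF d2g])
    also have "\<dots> = g" using sy m by simp
    finally show ?thesis .
  qed
  have hu: "cmp Z Z (sh C X) h u = h"
  proof -
    have "cmp Z Z (sh C X) h u = cmp Z (sh C X) (sh C X) (shf X X (ad X X (cmp X X1 X ax1 bx1) (cmp X X2 X ax2 bx2))) h"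
      unfolding u_def using m mx my m1 m2 c1 c2 d1 d2
      by (simp add: c1h[symmetric] c2h[symmetric] pre2[OF d1h[symmetric]] pre2[OF d2h[symmetric]])
    also have "\<dots> = h" using sx m by simp
    finally show ?thesis .
  qed
  obtain w where w: "w \<in> Hom C Z Z" "cmp Z Z Z w u = idm C Z"
    using endo_iso[OF T u ug hu] unfolding is_iso_t by blast
  have e: "ad Z Z (cmp Z C1 Z (cmp C1 Z Z w d1) c1) (cmp Z C2 Z (cmp C2 Z Z w d2) c2) = idm C Z"
  proof -
    have "ad Z Z (cmp Z C1 Z (cmp C1 Z Z w d1) c1) (cmp Z C2 Z (cmp C2 Z Z w d2) c2) = cmp Z Z Z w u"
      unfolding u_def using w c1 c2 d1 d2 by simp
    then show ?thesis using w by simp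
  qed
  show ?thesis unfolding Vc_def
    apply (rule CollectI, rule exI[of _ C1], rule exI[of _ C2], rule exI[of _ "cmp C1 Z Z w d1"], rule exI[of _ c1],
         rule exI[of _ "cmp C2 Z Z w d2"], rule exI[of _ c2])
    using c1A c2B c1 c2 d1 d2 w e by simp
qed

lemma Vc_thick: "thick C (Vc A B)"
proof -
  have 1: "\<exists>Z\<in>Vc A B. zero_obj C Z" using zero_ex Vc_zero by blast
  have 2: "\<forall>X Y. X \<in> Vc A B \<longrightarrow> isomorphic C X Y \<longrightarrow> Y \<in> Vc A B" using Vc_iso by blast
  have 3: "\<forall>X. X \<in> Vc A B \<longleftrightarrow> sh C X \<in> Vc A B" using Vc_sh1 Vc_sh2 by blast
  have 5: "\<forall>X Y S. biprod C X Y S \<longrightarrow> S \<in> Vc A B \<longrightarrow> X \<in> Vc A B" using Vc_summand by blast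
  have 4: "\<forall>X Y Z f g h. (X, Y, Z, f, g, h) \<in> dtri C \<longrightarrow>
        (X \<in> Vc A B \<and> Y \<in> Vc A B \<longrightarrow> Z \<in> Vc A B) \<and> (Y \<in> Vc A B \<and> Z \<in> Vc A B \<longrightarrow> X \<in> Vc A B) \<and>
        (X \<in> Vc A B \<and> Z \<in> Vc A B \<longrightarrow> Y \<in> Vc A B)"
  proof (intro allI impI)
    fix X Y Z f g h assume T: "(X, Y, Z, f, g, h) \<in> dtri C"
    have T1: "(Y, Z, sh C X, g, h, sc (sh C X) (sh C Y) (-1) (shf X Y f)) \<in> dtri C" using dtri_rot[OF T] .
    show "(X \<in> Vc A B \<and> Y \<in> Vc A B \<longrightarrow> Z \<in> Vc A B) \<and> (Y \<in> Vc A B \<and> Z \<in> Vc A B \<longrightarrow> X \<in> Vc A B) \<and>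
        (X \<in> Vc A B \<and> Z \<in> Vc A B \<longrightarrow> Y \<in> Vc A B)"
      using Vc_cone[OF T] Vc_cone[OF T1] Vc_cone[OF dtri_rot[OF T1]] Vc_sh1 Vc_sh2 by blast
  qed
  show ?thesis unfolding thick_def using 1 2 3 4 5 by blast
qed

lemma Vc_biprod:
  assumes bA: "\<forall>X Y S. biprod C X Y S \<longrightarrow> X \<in> A \<longrightarrow> Y \<in> A \<longrightarrow> S \<in> A"
    and bB: "\<forall>X Y S. biprod C X Y S \<longrightarrow> X \<in> B \<longrightarrow> Y \<in> B \<longrightarrow> S \<in> B"
    and b: "biprod C X Y S" and x: "X \<in> Vc A B" and y: "Y \<in> Vc A B"
  shows "S \<in> Vc A B"
proof -
  obtain X1 X2 ax1 bx1 ax2 bx2 where mx: "X1 \<in> A" "X2 \<in> B" "bx1 \<in> Hom C X X1" "ax1 \<in> Hom C X1 X"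
     "bx2 \<in> Hom C X X2" "ax2 \<in> Hom C X2 X" and sx: "ad X X (cmp X X1 X ax1 bx1) (cmp X X2 X ax2 bx2) = idm C X"
    using x unfolding Vc_def by blast
  obtain Y1 Y2 ay1 by1 ay2 by2 where my: "Y1 \<in> A" "Y2 \<in> B" "by1 \<in> Hom C Y Y1" "ay1 \<in> Hom C Y1 Y"
     "by2 \<in> Hom C Y Y2" "ay2 \<in> Hom C Y2 Y" and sy: "ad Y Y (cmp Y Y1 Y ay1 by1) (cmp Y Y2 Y ay2 by2) = idm C Y"
    using y unfolding Vc_def by blast
  obtain iX iY pX pY where bs: "iX \<in> Hom C X S" "iY \<in> Hom C Y S" "pX \<in> Hom C S X" "pY \<in> Hom C S Y"
     and ss: "ad S S (cmp S X S iX pX) (cmp S Y S iY pY) = idm C S"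
    using b unfolding biprod_t by blast
  obtain Z1 where z1: "biprod C X1 Y1 Z1" using K_biprodex by blast
  then have Z1: "Z1 \<in> A" using bA mx my by blast
  obtain k k' q q' where bz1: "k \<in> Hom C X1 Z1" "k' \<in> Hom C Y1 Z1" "q \<in> Hom C Z1 X1" "q' \<in> Hom C Z1 Y1"
     "cmp X1 Z1 X1 q k = idm C X1" "cmp Y1 Z1 Y1 q' k' = idm C Y1"
     "cmp Y1 Z1 X1 q k' = zer C Y1 X1" "cmp X1 Z1 Y1 q' k = zer C X1 Y1"
    using z1 unfolding biprod_t by blast
  obtain Z2 where z2: "biprod C X2 Y2 Z2" using K_biprodex by blast
  then have Z2: "Z2 \<in> B" using bB mx my by blast
  obtain l l' t t' where bz2: "l \<in> Hom C X2 Z2" "l' \<in> Hom C Y2 Z2" "t \<in> Hom C Z2 X2" "t' \<in> Hom C Z2 Y2"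
     "cmp X2 Z2 X2 t l = idm C X2" "cmp Y2 Z2 Y2 t' l' = idm C Y2"
     "cmp Y2 Z2 X2 t l' = zer C Y2 X2" "cmp X2 Z2 Y2 t' l = zer C X2 Y2"
    using z2 unfolding biprod_t by blast
  let ?b1 = "ad S Z1 (cmp S X Z1 (cmp X X1 Z1 k bx1) pX) (cmp S Y Z1 (cmp Y Y1 Z1 k' by1) pY)"
  let ?a1 = "ad Z1 S (cmp Z1 X S iX (cmp Z1 X1 X ax1 q)) (cmp Z1 Y S iY (cmp Z1 Y1 Y ay1 q'))"
  let ?b2 = "ad S Z2 (cmp S X Z2 (cmp X X2 Z2 l bx2) pX) (cmp S Y Z2 (cmp Y Y2 Z2 l' by2) pY)"
  let ?a2 = "ad Z2 S (cmp Z2 X S iX (cmp Z2 X2 X ax2 t)) (cmp Z2 Y S iY (cmp Z2 Y2 Y ay2 t'))"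
  note simps = pre2[OF bz1(5)] pre2[OF bz1(6)] pre2[OF bz1(7)] pre2[OF bz1(8)]
    pre2[OF bz2(5)] pre2[OF bz2(6)] pre2[OF bz2(7)] pre2[OF bz2(8)]
  have "ad S S (cmp S Z1 S ?a1 ?b1) (cmp S Z2 S ?a2 ?b2) =
     ad S S (cmp S X S iX (cmp S X X (ad X X (cmp X X1 X ax1 bx1) (cmp X X2 X ax2 bx2)) pX))
            (cmp S Y S iY (cmp S Y Y (ad Y Y (cmp Y Y1 Y ay1 by1) (cmp Y Y2 Y ay2 by2)) pY))"
    using mx(3-6) my(3-6) bs bz1(1-4) bz2(1-4) by (simp add: simps ad_comm ad_lcomm)
  also have "\<dots> = idm C S" unfolding sx sy using bs ss by simp
  finally have e: "ad S S (cmp S Z1 S ?a1 ?b1) (cmp S Z2 S ?a2 ?b2) = idm C S" .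
  show ?thesis unfolding Vc_def
    apply (rule CollectI, rule exI[of _ Z1], rule exI[of _ Z2], rule exI[of _ ?a1], rule exI[of _ ?b1],
         rule exI[of _ ?a2], rule exI[of _ ?b2])
    using Z1 Z2 e mx(3-6) my(3-6) bs bz1(1-4) bz2(1-4) by simp
qed

lemma A_Vc: "X \<in> A \<Longrightarrow> X \<in> Vc A B"
proof -
  assume x: "X \<in> A"
  obtain Z0 where z: "zero_obj C Z0" using zero_ex by blast
  show ?thesis unfolding Vc_def
    apply (rule CollectI, rule exI[of _ X], rule exI[of _ Z0], rule exI[of _ "idm C X"], rule exI[of _ "idm C X"],
         rule exI[of _ "zer C Z0 X"], rule exI[of _ "zer C X Z0"])
    using x B_zero[OF z] by simp
qed

lemma B_Vc: "X \<in> B \<Longrightarrow> X \<in> Vc A B"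
proof -
  assume x: "X \<in> B"
  obtain Z0 where z: "zero_obj C Z0" using zero_ex by blast
  show ?thesis unfolding Vc_def
    apply (rule CollectI, rule exI[of _ Z0], rule exI[of _ X], rule exI[of _ "zer C Z0 X"], rule exI[of _ "zer C X Z0"],
         rule exI[of _ "idm C X"], rule exI[of _ "idm C X"])
    using x A_zero[OF z] by simp
qed

lemma dsum_Vc:
  assumes bA: "\<forall>X Y S. biprod C X Y S \<longrightarrow> X \<in> A \<longrightarrow> Y \<in> A \<longrightarrow> S \<in> A"
    and bB: "\<forall>X Y S. biprod C X Y S \<longrightarrow> X \<in> B \<longrightarrow> Y \<in> B \<longrightarrow> S \<in> B"
  shows "dsum C Ws S \<Longrightarrow> (\<forall>W\<in>set Ws. W \<in> Vc A B) \<Longrightarrow> S \<in> Vc A B"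
proof (induction rule: dsum.induct)
  case (dsum_Nil Z)
  then show ?case using Vc_zero by blast
next
  case (dsum_Cons Xs S' X S)
  then show ?case using Vc_biprod[OF bA bB] by simp
qed

lemma local_AB:
  assumes rA: "\<forall>X S i p. S \<in> A \<longrightarrow> i \<in> Hom C X S \<longrightarrow> p \<in> Hom C S X \<longrightarrow> cmp X S X p i = idm C X \<longrightarrow> X \<in> A"
    and rB: "\<forall>X S i p. S \<in> B \<longrightarrow> i \<in> Hom C X S \<longrightarrow> p \<in> Hom C S X \<longrightarrow> cmp X S X p i = idm C X \<longrightarrow> X \<in> B"
    and l: "local_end C X" and x: "X \<in> Vc A B"
  shows "X \<in> A \<or> X \<in> B"
proof -
  obtain Z1 Z2 a1 b1 a2 b2 where m: "Z1 \<in> A" "Z2 \<in> B" "b1 \<in> Hom C X Z1" "a1 \<in> Hom C Z1 X"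
     "b2 \<in> Hom C X Z2" "a2 \<in> Hom C Z2 X" and s: "ad X X (cmp X Z1 X a1 b1) (cmp X Z2 X a2 b2) = idm C X"
    using x unfolding Vc_def by blast
  have e1: "cmp X Z1 X a1 b1 \<in> Hom C X X" using m by simp
  have "is_iso C X X (cmp X Z1 X a1 b1) \<or> is_iso C X X (ad X X (idm C X) (sc X X (-1) (cmp X Z1 X a1 b1)))"
    using l e1 unfolding local_end_def ad_def sc_def cmp_def by blast
  moreover have "ad X X (idm C X) (sc X X (-1) (cmp X Z1 X a1 b1)) = cmp X Z2 X a2 b2"
  proof -
    have "ad X X (idm C X) (sc X X (-1) (cmp X Z1 X a1 b1)) =
      ad X X (ad X X (cmp X Z1 X a1 b1) (cmp X Z2 X a2 b2)) (sc X X (-1) (cmp X Z1 X a1 b1))"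
      unfolding s ..
    also have "\<dots> = cmp X Z2 X a2 b2" using m by (simp add: ad_comm ad_lcomm)
    finally show ?thesis .
  qed
  ultimately have "is_iso C X X (cmp X Z1 X a1 b1) \<or> is_iso C X X (cmp X Z2 X a2 b2)" by simp
  then show ?thesis
  proof
    assume "is_iso C X X (cmp X Z1 X a1 b1)"
    then obtain w where w: "w \<in> Hom C X X" "cmp X X X w (cmp X Z1 X a1 b1) = idm C X" unfolding is_iso_t by blast
    have "cmp X Z1 X (cmp Z1 X X w a1) b1 = idm C X" using w m by simp
    then have "X \<in> A" using rA m w by (meson cmp_in)
    then show ?thesis by blast
  next
    assume "is_iso C X X (cmp X Z2 X a2 b2)"
    then obtain w where w: "w \<in> Hom C X X" "cmp X X X w (cmp X Z2 X a2 b2) = idm C X" unfolding is_iso_t by blast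
    have "cmp X Z2 X (cmp Z2 X X w a2) b2 = idm C X" using w m by simp
    then have "X \<in> B" using rB m w by (meson cmp_in)
    then show ?thesis by blast
  qed
qed

end


lemma local_indec: "local_end C X \<Longrightarrow> indec C X"
proof -
  assume l: "local_end C X"
  have nz0: "\<not> zero_obj C X" using l unfolding local_end_def by blast
  have "zero_obj C U \<or> zero_obj C V" if b: "biprod C U V X" for U V
  proof -
    obtain i1 i2 p1 p2 where m: "i1 \<in> Hom C U X" "i2 \<in> Hom C V X" "p1 \<in> Hom C X U" "p2 \<in> Hom C X V"
     "cmp U X U p1 i1 = idm C U" "cmp V X V p2 i2 = idm C V"
     "cmp V X U p1 i2 = zer C V U" "cmp U X V p2 i1 = zer C U V"
     and s: "ad X X (cmp X U X i1 p1) (cmp X V X i2 p2) = idm C X"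
      using b unfolding biprod_t by blast
    have e1: "cmp X U X i1 p1 \<in> Hom C X X" using m by simp
    have "is_iso C X X (cmp X U X i1 p1) \<or> is_iso C X X (ad X X (idm C X) (sc X X (-1) (cmp X U X i1 p1)))"
      using l e1 unfolding local_end_def ad_def sc_def cmp_def by blast
    moreover have "ad X X (idm C X) (sc X X (-1) (cmp X U X i1 p1)) = cmp X V X i2 p2"
    proof -
      have "ad X X (idm C X) (sc X X (-1) (cmp X U X i1 p1)) =
        ad X X (ad X X (cmp X U X i1 p1) (cmp X V X i2 p2)) (sc X X (-1) (cmp X U X i1 p1))"
        unfolding s ..
      also have "\<dots> = cmp X V X i2 p2" using m(1-4) by (simp add: ad_comm ad_lcomm)
      finally show ?thesis .
    qed
    ultimately have "is_iso C X X (cmp X U X i1 p1) \<or> is_iso C X X (cmp X V X i2 p2)" by simp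
    then show ?thesis
    proof
      assume "is_iso C X X (cmp X U X i1 p1)"
      then obtain w where w: "w \<in> Hom C X X" "cmp X X X (cmp X U X i1 p1) w = idm C X" unfolding is_iso_t by blast
      have "p2 = cmp X X V p2 (cmp X X X (cmp X U X i1 p1) w)" using w m by simp
      also have "\<dots> = zer C X V" using w(1) m by (simp add: pre2[OF m(8)])
      finally have "idm C V = zer C V V" using m by simp
      then show ?thesis unfolding zero_obj_iff by blast
    next
      assume "is_iso C X X (cmp X V X i2 p2)"
      then obtain w where w: "w \<in> Hom C X X" "cmp X X X (cmp X V X i2 p2) w = idm C X" unfolding is_iso_t by blast
      have "p1 = cmp X X U p1 (cmp X X X (cmp X V X i2 p2) w)" using w m by simp
      also have "\<dots> = zer C X U" using w(1) m by (simp add: pre2[OF m(7)])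
      finally have "idm C U = zer C U U" using m by simp
      then show ?thesis unfolding zero_obj_iff by blast
    qed
  qed
  then show ?thesis unfolding indec_def using nz0 by blast
qed

lemma indec_local_iso: "krull_schmidt C \<Longrightarrow> indec C X \<Longrightarrow> \<exists>L. local_end C L \<and> isomorphic C L X"
proof -
  assume ks: "krull_schmidt C" and ind: "indec C X"
  obtain Xs where d: "dsum C Xs X" and l: "\<forall>Y\<in>set Xs. local_end C Y" using ks unfolding krull_schmidt_def by blast
  show ?thesis
  proof (cases Xs)
    case Nil
    then have "zero_obj C X" using d by (auto elim: dsum.cases)
    then show ?thesis using ind unfolding indec_def by blast
  next
    case (Cons L Ls)
    then obtain S' where b: "biprod C L S' X" using d by (auto elim: dsum.cases)
    have "local_end C L" using l Cons by simp
    then have "\<not> zero_obj C L" unfolding local_end_def by blast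
    then have "zero_obj C S'" using ind b unfolding indec_def by blast
    then have "isomorphic C L X" using biprod_zero_iso[OF b] by blast
    then show ?thesis using \<open>local_end C L\<close> by blast
  qed
qed

lemma dsum_member: "dsum C Ws S \<Longrightarrow> W \<in> set Ws \<Longrightarrow> \<exists>W'. biprod C W W' S"
proof (induction rule: dsum.induct)
  case (dsum_Nil Z)
  then show ?case by simp
next
  case (dsum_Cons Xs S' X S)
  show ?case
  proof (cases "W = X")
    case True
    then show ?thesis using dsum_Cons by blast
  next
    case False
    then have "W \<in> set Xs" using dsum_Cons by simp
    then obtain W' where "biprod C W W' S'" using dsum_Cons by blast
    then show ?thesis using summand_trans biprod_sym[OF dsum_Cons(2)] by blast
  qed
qed

lemma dsum_sh: "dsum C Xs S \<Longrightarrow> dsum C (map (sh C) Xs) (sh C S)"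
proof (induction rule: dsum.induct)
  case (dsum_Nil Z)
  then show ?case using zero_sh by (simp add: dsum.dsum_Nil)
next
  case (dsum_Cons Xs S' X S)
  then show ?case using biprod_sh by (simp add: dsum.dsum_Cons)
qed

lemma indec_iso: "indec C X \<Longrightarrow> isomorphic C X Y \<Longrightarrow> indec C Y"
  unfolding indec_def using zero_iso isomorphic_sym biprod_iso_S by metis

lemma indec_sh: "indec C X \<Longrightarrow> indec C (sh C X)"
proof -
  assume ind: "indec C X"
  have "\<not> zero_obj C (sh C X)" using ind zero_sh unfolding indec_def by blast
  moreover have "zero_obj C U \<or> zero_obj C V" if b: "biprod C U V (sh C X)" for U V
  proof -
    obtain U' where u: "isomorphic C (sh C U') U" using ess by blast
    obtain V' where v: "isomorphic C (sh C V') V" using ess by blast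
    have "biprod C (sh C U') V (sh C X)" using biprod_iso_X[OF b isomorphic_sym[OF u]] .
    then have "biprod C (sh C V') (sh C U') (sh C X)" using biprod_iso_X[OF biprod_sym isomorphic_sym[OF v]] by blast
    then have "biprod C V' U' X" using biprod_unsh by blast
    then have "zero_obj C V' \<or> zero_obj C U'" using ind unfolding indec_def by blast
    then show ?thesis using zero_sh zero_iso u v by blast
  qed
  ultimately show ?thesis unfolding indec_def by blast
qed

lemma susp_sh: "is_suspension_of C G Y \<Longrightarrow> is_suspension_of C G (sh C Y)"
proof -
  assume "is_suspension_of C G Y"
  then obtain i where "isomorphic C Y ((sh C ^^ i) G) \<or> isomorphic C ((sh C ^^ i) Y) G"
    unfolding is_suspension_of_def by blast
  then show ?thesis
  proof
    assume "isomorphic C Y ((sh C ^^ i) G)"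
    then have "isomorphic C (sh C Y) ((sh C ^^ Suc i) G)" using isomorphic_sh by simp
    then show ?thesis unfolding is_suspension_of_def by blast
  next
    assume a: "isomorphic C ((sh C ^^ i) Y) G"
    show ?thesis
    proof (cases i)
      case 0
      then have "isomorphic C (sh C Y) ((sh C ^^ 1) G)" using a isomorphic_sh by simp
      then show ?thesis unfolding is_suspension_of_def by blast
    next
      case (Suc j)
      then have "isomorphic C ((sh C ^^ j) (sh C Y)) G" using a by (simp add: funpow_Suc_right del: funpow.simps)
      then show ?thesis unfolding is_suspension_of_def by blast
    qed
  qed
qed

lemma in_add1_sh: "in_add1 C G F \<Longrightarrow> in_add1 C G (sh C F)"
proof -
  assume "in_add1 C G F"
  then obtain Xs S F' where a: "\<forall>X\<in>set Xs. is_suspension_of C G X" "dsum C Xs S" "biprod C F F' S"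
    unfolding in_add1_def by blast
  have "\<forall>X\<in>set (map (sh C) Xs). is_suspension_of C G X" using a(1) susp_sh by auto
  moreover have "dsum C (map (sh C) Xs) (sh C S)" using dsum_sh[OF a(2)] .
  moreover have "biprod C (sh C F) (sh C F') (sh C S)" using biprod_sh[OF a(3)] .
  ultimately show ?thesis unfolding in_add1_def by blast
qed

lemma in_add1_iso: "in_add1 C G F \<Longrightarrow> isomorphic C F F2 \<Longrightarrow> in_add1 C G F2"
  unfolding in_add1_def using biprod_iso_X by blast

lemma in_add1_summand: "biprod C W W' G \<Longrightarrow> in_add1 C G W"
proof -
  assume b: "biprod C W W' G"
  obtain Z0 where z: "zero_obj C Z0" using zero_ex by blast
  have "dsum C [G] G" using dsum.dsum_Cons[OF dsum.dsum_Nil[OF z] biprod_zero_r[OF z]] .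
  moreover have "is_suspension_of C G G" unfolding is_suspension_of_def using isomorphic_refl
    by (metis funpow_0)
  ultimately have "(\<forall>X\<in>set [G]. is_suspension_of C G X) \<and> dsum C [G] G \<and> biprod C W W' G" using b by simp
  then show ?thesis unfolding in_add1_def by blast
qed


section \<open>Chains\<close>

definition "II G = {X. indec C X \<and> in_add1 C G X}"
definition "stp G X Y \<longleftrightarrow> X \<in> II G \<and> Y \<in> II G \<and> (ext1_nonzero C X Y \<or> ext1_nonzero C Y X)"
definition "cn G = (stp G)\<^sup>*\<^sup>*"

lemma ext1_nz: "ext1_nonzero C X Y \<longleftrightarrow> nz X (sh C Y)"
  unfolding ext1_nonzero_def nz_def ..

lemma II_sh: "X \<in> II G \<Longrightarrow> sh C X \<in> II G"
  unfolding II_def using indec_sh in_add1_sh by blast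

lemma II_iso: "X \<in> II G \<Longrightarrow> isomorphic C X Y \<Longrightarrow> Y \<in> II G"
  unfolding II_def using indec_iso in_add1_iso by blast

lemma stp_sym: "stp G X Y \<Longrightarrow> stp G Y X"
  unfolding stp_def by blast

lemma cn_sym: "cn G X Y \<Longrightarrow> cn G Y X"
  unfolding cn_def
proof (induction rule: rtranclp_induct)
  case base
  then show ?case by simp
next
  case (step y z)
  then show ?case using stp_sym by (metis converse_rtranclp_into_rtranclp)
qed

lemma cn_trans: "cn G X Y \<Longrightarrow> cn G Y Z \<Longrightarrow> cn G X Z"
  unfolding cn_def by (rule rtranclp_trans)

lemma cn_step: "stp G X Y \<Longrightarrow> cn G X Y"
  unfolding cn_def by blast

lemma cn_sh: "X \<in> II G \<Longrightarrow> cn G X (sh C X)"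
proof -
  assume x: "X \<in> II G"
  have "indec C (sh C X)" using II_sh[OF x] unfolding II_def by blast
  then have "\<not> zero_obj C (sh C X)" unfolding indec_def by blast
  then have "nz (sh C X) (sh C X)" using zero_not_nz by blast
  then have "ext1_nonzero C (sh C X) X" unfolding ext1_nz .
  then have "stp G X (sh C X)" using x II_sh[OF x] unfolding stp_def by blast
  then show ?thesis by (rule cn_step)
qed

lemma cn_iso: "X \<in> II G \<Longrightarrow> isomorphic C X Y \<Longrightarrow> cn G X Y"
proof -
  assume x: "X \<in> II G" and i: "isomorphic C X Y"
  have "indec C (sh C X)" using II_sh[OF x] unfolding II_def by blast
  then have "\<not> zero_obj C (sh C X)" unfolding indec_def by blast
  then have "nz (sh C X) (sh C X)" using zero_not_nz by blast
  then have "nz (sh C X) (sh C Y)" using nz_iso isomorphic_refl isomorphic_sh[OF i] by blast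
  then have "ext1_nonzero C (sh C X) Y" unfolding ext1_nz .
  then have "stp G (sh C X) Y" using II_sh[OF x] II_iso[OF x i] unfolding stp_def by blast
  then show ?thesis using cn_sh[OF x] cn_step cn_trans by blast
qed

lemma cn_list: "cn G F F' \<Longrightarrow> F \<in> II G \<Longrightarrow>
  (\<exists>Fs. Fs \<noteq> [] \<and> hd Fs = F \<and> last Fs = F' \<and>
         (\<forall>X\<in>set Fs. indec C X \<and> in_add1 C G X) \<and>
         (\<forall>i. Suc i < length Fs \<longrightarrow>
            ext1_nonzero C (Fs ! i) (Fs ! Suc i) \<or> ext1_nonzero C (Fs ! Suc i) (Fs ! i)))"
  unfolding cn_def
proof (induction rule: rtranclp_induct)
  case base
  then show ?case unfolding II_def by (intro exI[of _ "[F]"]) auto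
next
  case (step y z)
  then obtain Fs where fs: "Fs \<noteq> []" "hd Fs = F" "last Fs = y" "\<forall>X\<in>set Fs. indec C X \<and> in_add1 C G X"
     "\<forall>i. Suc i < length Fs \<longrightarrow> ext1_nonzero C (Fs ! i) (Fs ! Suc i) \<or> ext1_nonzero C (Fs ! Suc i) (Fs ! i)"
    by blast
  have st: "stp G y z" using step by blast
  have z: "indec C z \<and> in_add1 C G z" using st unfolding stp_def II_def by blast
  have yz: "ext1_nonzero C y z \<or> ext1_nonzero C z y" using st unfolding stp_def by blast
  have "\<forall>i. Suc i < length (Fs @ [z]) \<longrightarrow> ext1_nonzero C ((Fs @ [z]) ! i) ((Fs @ [z]) ! Suc i) \<or> ext1_nonzero C ((Fs @ [z]) ! Suc i) ((Fs @ [z]) ! i)"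
  proof (intro allI impI)
    fix i assume i: "Suc i < length (Fs @ [z])"
    show "ext1_nonzero C ((Fs @ [z]) ! i) ((Fs @ [z]) ! Suc i) \<or> ext1_nonzero C ((Fs @ [z]) ! Suc i) ((Fs @ [z]) ! i)"
    proof (cases "Suc i < length Fs")
      case True
      then show ?thesis using fs(5) by (simp add: nth_append)
    next
      case False
      then have e: "Suc i = length Fs" using i by simp
      then have ii: "i = length Fs - 1" by simp
      then have "(Fs @ [z]) ! i = y" using fs(1) fs(3) e by (simp add: nth_append last_conv_nth)
      moreover have "(Fs @ [z]) ! Suc i = z" using e by (simp add: nth_append)
      ultimately show ?thesis using yz by simp
    qed
  qed
  then show ?case using fs z by (intro exI[of _ "Fs @ [z]"]) auto
qed

lemma funpow_sh: "(sh C ^^ i) (sh C X) = sh C ((sh C ^^ i) X)"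
  by (simp add: funpow_swap1)

lemma nz_shi: "nz ((sh C ^^ i) X) ((sh C ^^ i) Y) \<longleftrightarrow> nz X Y"
  by (induction i) (simp_all add: nz_sh)

lemma iso_shi: "isomorphic C X Y \<Longrightarrow> isomorphic C ((sh C ^^ i) X) ((sh C ^^ i) Y)"
  by (induction i) (simp_all add: isomorphic_sh)

section \<open>The splitting\<close>

lemma cat_split:
  assumes KS: "krull_schmidt C" and cg: "classical_generator C G" and nhc: "\<not> homologically_connected C G"
  shows "\<exists>A B. (\<forall>X. indec C X \<longrightarrow> X \<in> A \<or> X \<in> B) \<and> (\<forall>X\<in>A. \<forall>Y\<in>B. \<not> nz X Y \<and> \<not> nz Y X) \<and>
     (\<forall>X X'. X \<in> A \<longrightarrow> isomorphic C X X' \<longrightarrow> X' \<in> A) \<and> (\<forall>X X'. X \<in> B \<longrightarrow> isomorphic C X X' \<longrightarrow> X' \<in> B) \<and>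
     (\<exists>X. indec C X \<and> X \<in> A) \<and> (\<exists>Y. indec C Y \<and> Y \<in> B)"
proof -
  obtain F F' where FF: "indec C F" "in_add1 C G F" "indec C F'" "in_add1 C G F'"
    and nch: "\<not> (\<exists>Fs. Fs \<noteq> [] \<and> hd Fs = F \<and> last Fs = F' \<and>
         (\<forall>X\<in>set Fs. indec C X \<and> in_add1 C G X) \<and>
         (\<forall>i. Suc i < length Fs \<longrightarrow>
            ext1_nonzero C (Fs ! i) (Fs ! Suc i) \<or> ext1_nonzero C (Fs ! Suc i) (Fs ! i)))"
    using nhc unfolding homologically_connected_def by blast
  have F: "F \<in> II G" and F': "F' \<in> II G" using FF unfolding II_def by auto
  have ncn: "\<not> cn G F F'"
  proof
    assume c: "cn G F F'"
    show False using nch cn_list[OF c F] by (rule notE)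
  qed
  define P0 where "P0 = {X \<in> II G. cn G F X}"
  define Q0 where "Q0 = {X \<in> II G. \<not> cn G F X}"
  define Q where "Q = {q. \<exists>i. (sh C ^^ i) q \<in> Q0}"
  have Q0_sh: "sh C X \<in> Q0" if x: "X \<in> Q0" for X
  proof -
    have xi: "X \<in> II G" and nx: "\<not> cn G F X" using x unfolding Q0_def by auto
    have "\<not> cn G F (sh C X)"
    proof
      assume "cn G F (sh C X)"
      from cn_trans[OF this cn_sym[OF cn_sh[OF xi]]] show False using nx by simp
    qed
    then show ?thesis using II_sh[OF xi] unfolding Q0_def by simp
  qed
  have P0_sh: "sh C X \<in> P0" if x: "X \<in> P0" for X
  proof -
    have xi: "X \<in> II G" and nx: "cn G F X" using x unfolding P0_def by auto
    have "cn G F (sh C X)" using cn_trans[OF nx cn_sh[OF xi]] .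
    then show ?thesis using II_sh[OF xi] unfolding P0_def by simp
  qed
  have Q0_iso: "Y \<in> Q0" if x: "X \<in> Q0" and i: "isomorphic C X Y" for X Y
  proof -
    have xi: "X \<in> II G" and nx: "\<not> cn G F X" using x unfolding Q0_def by auto
    have "\<not> cn G F Y"
    proof
      assume "cn G F Y"
      from cn_trans[OF this cn_sym[OF cn_iso[OF xi i]]] show False using nx by simp
    qed
    then show ?thesis using II_iso[OF xi i] unfolding Q0_def by simp
  qed
  have Q0_shi: "(sh C ^^ i) X \<in> Q0" if "X \<in> Q0" for X i
    using that by (induction i) (simp_all add: Q0_sh)
  have P0_shi: "(sh C ^^ i) X \<in> P0" if "X \<in> P0" for X i
    using that by (induction i) (simp_all add: P0_sh)
  have core: "\<not> nz p q \<and> \<not> nz q p" if p: "p \<in> P0" and q: "q \<in> Q0" for p q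
  proof (intro conjI notI)
    assume "nz p q"
    then have "nz (sh C p) (sh C q)" using nz_sh by blast
    have pi: "p \<in> II G" "cn G F p" using p unfolding P0_def by auto
    have qi: "q \<in> II G" "\<not> cn G F q" using q unfolding Q0_def by auto
    have "stp G (sh C p) q" using II_sh[OF pi(1)] qi(1) \<open>nz (sh C p) (sh C q)\<close> unfolding stp_def ext1_nz by blast
    then have "cn G F q" using cn_trans[OF cn_trans[OF pi(2) cn_sh[OF pi(1)]] cn_step] by blast
    then show False using qi by simp
  next
    assume "nz q p"
    then have "nz (sh C q) (sh C p)" using nz_sh by blast
    have pi: "p \<in> II G" "cn G F p" using p unfolding P0_def by auto
    have qi: "q \<in> II G" "\<not> cn G F q" using q unfolding Q0_def by auto
    have "stp G (sh C q) p" using II_sh[OF qi(1)] pi(1) \<open>nz (sh C q) (sh C p)\<close> unfolding stp_def ext1_nz by blast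
    then have "cn G (sh C q) p" by (rule cn_step)
    then have "cn G q p" using cn_trans[OF cn_sh[OF qi(1)]] by blast
    then have "cn G F q" using cn_trans[OF pi(2) cn_sym] by blast
    then show False using qi by simp
  qed
  have stQ: "shstable Q" unfolding shstable_def
  proof (intro conjI ballI)
    fix Y assume "Y \<in> Q"
    then obtain i where "(sh C ^^ i) Y \<in> Q0" unfolding Q_def by blast
    then have "(sh C ^^ i) (sh C Y) \<in> Q0" using Q0_sh by (simp add: funpow_sh)
    then show "sh C Y \<in> Q" unfolding Q_def by blast
  next
    fix Y assume "Y \<in> Q"
    then obtain i where y: "(sh C ^^ i) Y \<in> Q0" unfolding Q_def by blast
    obtain Y' where i: "isomorphic C (sh C Y') Y" using ess by blast
    have "isomorphic C ((sh C ^^ i) (sh C Y')) ((sh C ^^ i) Y)" using iso_shi[OF i] .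
    then have "(sh C ^^ Suc i) Y' \<in> Q0" using Q0_iso[OF y] isomorphic_sym
      by (simp add: funpow_Suc_right del: funpow.simps)
    then have "Y' \<in> Q" unfolding Q_def by blast
    then show "\<exists>Y'\<in>Q. isomorphic C (sh C Y') Y" using i by blast
  qed
  define A where "A = orth Q"
  define B where "B = orth A"
  have stA: "shstable A" unfolding A_def using orth_shstable[OF stQ] .
  have gA: "goodcl A" unfolding A_def using orth_goodcl[OF stQ] .
  have gB: "goodcl B" unfolding B_def using orth_goodcl[OF stA] .
  have oAB: "\<forall>a\<in>A. \<forall>b\<in>B. \<not> nz a b \<and> \<not> nz b a" unfolding B_def orth_def by blast
  have P0A: "P0 \<subseteq> A"
  proof
    fix p assume p: "p \<in> P0"
    show "p \<in> A" unfolding A_def orth_def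
    proof (intro CollectI ballI)
      fix q assume "q \<in> Q"
      then obtain i where qi: "(sh C ^^ i) q \<in> Q0" unfolding Q_def by blast
      have "\<not> nz ((sh C ^^ i) p) ((sh C ^^ i) q) \<and> \<not> nz ((sh C ^^ i) q) ((sh C ^^ i) p)"
        using core[OF P0_shi[OF p] qi] .
      then show "\<not> nz p q \<and> \<not> nz q p" unfolding nz_shi .
    qed
  qed
  have Q0Q: "Q0 \<subseteq> Q" unfolding Q_def by (auto intro: exI[of _ 0])
  have Q0B: "Q0 \<subseteq> B" unfolding B_def A_def orth_def using Q0Q by blast
  have bA: "\<forall>X Y S. biprod C X Y S \<longrightarrow> X \<in> A \<longrightarrow> Y \<in> A \<longrightarrow> S \<in> A" unfolding A_def using orth_biprod by blast
  have bB: "\<forall>X Y S. biprod C X Y S \<longrightarrow> X \<in> B \<longrightarrow> Y \<in> B \<longrightarrow> S \<in> B" unfolding B_def using orth_biprod by blast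
  have rA: "\<forall>X S i p. S \<in> A \<longrightarrow> i \<in> Hom C X S \<longrightarrow> p \<in> Hom C S X \<longrightarrow> cmp X S X p i = idm C X \<longrightarrow> X \<in> A"
    unfolding A_def using orth_retract by blast
  have rB: "\<forall>X S i p. S \<in> B \<longrightarrow> i \<in> Hom C X S \<longrightarrow> p \<in> Hom C S X \<longrightarrow> cmp X S X p i = idm C X \<longrightarrow> X \<in> B"
    unfolding B_def using orth_retract by blast
  obtain Ws where d: "dsum C Ws G" and l: "\<forall>W\<in>set Ws. local_end C W" using KS unfolding krull_schmidt_def by blast
  have "\<forall>W\<in>set Ws. W \<in> Vc A B"
  proof
    fix W assume w: "W \<in> set Ws"
    then obtain W' where "biprod C W W' G" using dsum_member[OF d] by blast
    then have "in_add1 C G W" using in_add1_summand by blast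
    moreover have "indec C W" using local_indec l w by blast
    ultimately have "W \<in> II G" unfolding II_def by blast
    then have "W \<in> P0 \<or> W \<in> Q0" unfolding P0_def Q0_def by blast
    then show "W \<in> Vc A B" using P0A Q0B A_Vc[OF gA gB oAB] B_Vc[OF gA gB oAB] by blast
  qed
  then have GV: "G \<in> Vc A B" using dsum_Vc[OF gA gB oAB bA bB d] by blast
  have "thick_closure C G \<subseteq> Vc A B" unfolding thick_closure_def using Vc_thick[OF gA gB oAB] GV by blast
  then have allV: "X \<in> Vc A B" for X using cg unfolding classical_generator_def by blast
  have AB: "X \<in> A \<or> X \<in> B" if ind: "indec C X" for X
  proof -
    obtain L where L: "local_end C L" "isomorphic C L X" using indec_local_iso[OF KS ind] by blast
    have "L \<in> A \<or> L \<in> B" using local_AB[OF gA gB oAB rA rB L(1) allV] .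
    then show ?thesis using L(2) A_iso[OF gA gB oAB] B_iso[OF gA gB oAB] by blast
  qed
  have FA: "F \<in> A" using P0A F cn_def unfolding P0_def by auto
  have FB: "F' \<in> B" using Q0B F' ncn unfolding Q0_def by auto
  show ?thesis
    apply (rule exI[of _ A], rule exI[of _ B])
    using AB oAB A_iso[OF gA gB oAB] B_iso[OF gA gB oAB] FA FB FF by blast
qed

end


theorem proposition5p1:
  fixes M :: "complex set" and n :: nat
    and C :: "('o, 'm, 'k::field) tricat" and arc_of :: "'o \<Rightarrow> complex set" and G :: 'o
  assumes "n \<ge> 1"
    and "PY_marked M n"
    and "PY_category M C arc_of"
    and "classical_generator C G"
  shows "homologically_connected C G"
proof (rule ccontr)
  assume nhc: "\<not> homologically_connected C G"
  note n1 = assms(1) and PY = assms(2) and PYC = assms(3) and cg = assms(4)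
  have KL: "klinear_additive C" and KS: "krull_schmidt C" and TR: "triangulated C"
    using PYC unfolding PY_category_def by auto
  have arc1: "\<And>X. indec C X \<Longrightarrow> is_arc M (arc_of X)" using PYC unfolding PY_category_def by blast
  have arc2: "\<And>L. is_arc M L \<Longrightarrow> \<exists>X. indec C X \<and> arc_of X = L" using PYC unfolding PY_category_def by blast
  have arc3: "\<And>X Y. indec C X \<Longrightarrow> indec C Y \<Longrightarrow> arc_of X = arc_of Y \<Longrightarrow> isomorphic C X Y"
    using PYC unfolding PY_category_def by blast
  have homc: "\<And>X Y. indec C X \<Longrightarrow> indec C Y \<Longrightarrow> hom_cond M (arc_of X) (arc_unshift M (arc_of Y)) \<Longrightarrow> hom_one_dim C X Y"
    using PYC unfolding PY_category_def by metis
  interpret tc C using KL TR by unfold_locales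
  obtain A B where AB: "\<forall>X. indec C X \<longrightarrow> X \<in> A \<or> X \<in> B" and oAB: "\<forall>X\<in>A. \<forall>Y\<in>B. \<not> nz X Y \<and> \<not> nz Y X"
    and isoA: "\<forall>X X'. X \<in> A \<longrightarrow> isomorphic C X X' \<longrightarrow> X' \<in> A"
    and exA: "\<exists>X. indec C X \<and> X \<in> A" and exB: "\<exists>Y. indec C Y \<and> Y \<in> B"
    using cat_split[OF KS cg nhc] by blast
  have hnz: "nz X Y" if "indec C X" "indec C Y" "hom_cond M (arc_of X) (arc_unshift M (arc_of Y))" for X Y
    using homc[OF that] unfolding hom_one_dim_def nz_def by blast
  define S where "S = {L. \<exists>X. indec C X \<and> X \<in> A \<and> arc_of X = L}"
  have cl: "\<forall>L L'. is_arc M L \<longrightarrow> is_arc M L' \<longrightarrow>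
        (hom_cond M L (arc_unshift M L') \<or> hom_cond M L' (arc_unshift M L)) \<longrightarrow> L \<in> S \<longrightarrow> L' \<in> S"
  proof (intro allI impI)
    fix L L' assume l: "is_arc M L" and l': "is_arc M L'"
      and r: "hom_cond M L (arc_unshift M L') \<or> hom_cond M L' (arc_unshift M L)" and inS: "L \<in> S"
    obtain X where X: "indec C X" "X \<in> A" "arc_of X = L" using inS unfolding S_def by blast
    obtain Y where Y: "indec C Y" "arc_of Y = L'" using arc2[OF l'] by blast
    show "L' \<in> S"
    proof (cases "Y \<in> A")
      case True
      then show ?thesis unfolding S_def using Y by blast
    next
      case False
      then have yB: "Y \<in> B" using AB Y(1) by blast
      have "nz X Y \<or> nz Y X" using r hnz[OF X(1) Y(1)] hnz[OF Y(1) X(1)] X(3) Y(2) by blast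
      then show ?thesis using oAB X(2) yB by blast
    qed
  qed
  obtain X0 where X0: "indec C X0" "X0 \<in> A" using exA by blast
  obtain Y0 where Y0: "indec C Y0" "Y0 \<in> B" using exB by blast
  have "arc_of X0 \<in> S" unfolding S_def using X0 by blast
  then have "arc_of Y0 \<in> S" using arcs_connected[OF PY n1 cl arc1[OF X0(1)] arc1[OF Y0(1)]] by blast
  then obtain X where X: "indec C X" "X \<in> A" "arc_of X = arc_of Y0" unfolding S_def by blast
  have "isomorphic C X Y0" using arc3[OF X(1) Y0(1) X(3)] .
  then have "Y0 \<in> A" using isoA X(2) by blast
  then have "\<not> nz Y0 Y0" using oAB Y0(2) by blast
  then have "zero_obj C Y0" using zero_not_nz by blast
  then show False using Y0(1) unfolding indec_def by blast
qed

end
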